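(* Let $\delta\in(0,1)$, $R_V\ge1$ and $R_B\ge0$. (1) For any fixed $x\in\mathbb{R}^d$, with probability at least $1-3\delta$, for all $V,B\in\mathbb{R}^{m\times d}$ with $\|V-W_0\|\le R_V$ and $\|B-W_0\|\le R_B$, \[ |\langle\nabla f(x;V)-\nabla f(x;W_0),B\rangle|\le\frac{3\rho\|x\|(R_B+2R_V)R_V^{1/3}\ln(e/\delta)^{1/4}}{m^{1/6}}. \] (2) Let $\tau_1:=\frac{3\rho(R_B+2R_V)R_V^{1/3}\ln(e/\delta)^{1/4}}{m^{1/6}}$. With probability at least $1-3n\delta$, \[ \sup_{\|V_1-W_0\|\le R_V}\ \sup_{\|V_2-W_0\|\le R_V}\ \sup_{\|B-W_0\|\le R_B}\frac{\widehat{\mathcal R}_{V_1}(B)}{\widehat{\mathcal R}_{V_2}(B)}\le e^{2\tau_1}. \] (3) Suppose $m\ge\ln(edm)$. With probability at least $1-(1+3(d^2m)^d)\delta$, \[ \sup_{\|V-W_0\|\le R_V}\ \sup_{\|x\|\le1}|\langle\nabla f(x;V)-\nabla f(x;W_0),V\rangle|\le\frac{25\rho R_V^{4/3}\sqrt{\ln(edm/\delta)}}{m^{1/6}}=:\tau_3. \] (4) Suppose $m\ge\ln(edm)$. With probability at least $1-(1+3(d^2m)^d)\delta$, \[ \sup_{\|V-W_0\|\le R_V}\frac{\mathcal R(V)}{\mathcal R^{(0)}(V)}\le e^{\tau_3}. \]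
   Context: Data: $\mu$ a Borel probability measure on $\mathbb{R}^d\times\{-1,+1\}$ with $\|x\|\le1$ a.s.; sample $((x_k,y_k))_{k=1}^n$ (with $\|x_k\|\le1$). $\ell(r)=\ln(1+e^{-r})$. Network: width $m$, temperature $\rho>0$, $a_j$ i.i.d. uniform $\pm1$, $W_0\in\mathbb{R}^{m\times d}$ with i.i.d. $\mathcal N(0,1)$ entries, independent of $a$ and the sample. For $W$ with rows $w_j^\top$: $f(x;W)=\frac{\rho}{\sqrt m}\sum_ja_j\max\{0,w_j^\top x\}$, $\nabla f(x;W)=\frac{\rho}{\sqrt m}\sum_ja_j\mathbf 1[w_j^\top x\ge0]e_jx^\top$. For matrices $V,B$: $\widehat{\mathcal R}_V(B):=\frac1n\sum_k\ell(y_k\langle\nabla f(x_k;V),B\rangle)$ (the empirical risk of $B$ using the features at $V$); $\mathcal R(V)=\mathbb E\,\ell(Yf(X;V))$; $\mathcal R^{(0)}(V)=\mathbb E\,\ell(Y\langle\nabla f(X;W_0),V\rangle)$. $\langle A,B\rangle=\mathrm{tr}(A^\top B)$, $\|\cdot\|$ Frobenius norm. Probabilities over $a$, $W_0$ (and sample). *)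

theory Defs
  imports "HOL-Probability.Probability"
begin

text \<open>Vectors x in R^d are elements of real^'d (d = CARD('d)).  Matrices in R^(m x d)
  are functions (nat \<times> 'd) \<Rightarrow> real; only entries with row index j < m matter.\<close>

definition frob_inner :: "nat \<Rightarrow> (nat \<times> 'd::finite \<Rightarrow> real) \<Rightarrow> (nat \<times> 'd \<Rightarrow> real) \<Rightarrow> real" where
  "frob_inner m A B = (\<Sum>j<m. \<Sum>i\<in>UNIV. A (j, i) * B (j, i))"

definition frob_norm :: "nat \<Rightarrow> (nat \<times> 'd::finite \<Rightarrow> real) \<Rightarrow> real" where
  "frob_norm m A = sqrt (frob_inner m A A)"

definition mat_diff :: "(nat \<times> 'd::finite \<Rightarrow> real) \<Rightarrow> (nat \<times> 'd \<Rightarrow> real) \<Rightarrow> (nat \<times> 'd \<Rightarrow> real)" where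
  "mat_diff A B = (\<lambda>p. A p - B p)"

definition row_dot :: "(nat \<times> 'd::finite \<Rightarrow> real) \<Rightarrow> nat \<Rightarrow> real^'d \<Rightarrow> real" where
  "row_dot W j x = (\<Sum>i\<in>UNIV. W (j, i) * x $ i)"

definition relu_net :: "real \<Rightarrow> nat \<Rightarrow> (nat \<Rightarrow> real) \<Rightarrow> (nat \<times> 'd::finite \<Rightarrow> real) \<Rightarrow> real^'d \<Rightarrow> real" where
  "relu_net \<rho> m a W x = \<rho> / sqrt (real m) * (\<Sum>j<m. a j * max 0 (row_dot W j x))"

definition grad_net :: "real \<Rightarrow> nat \<Rightarrow> (nat \<Rightarrow> real) \<Rightarrow> (nat \<times> 'd::finite \<Rightarrow> real) \<Rightarrow> real^'d \<Rightarrow> (nat \<times> 'd \<Rightarrow> real)" where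
  "grad_net \<rho> m a W x = (\<lambda>(j, i). if j < m then
      \<rho> / sqrt (real m) * a j * (if row_dot W j x \<ge> 0 then 1 else 0) * x $ i else 0)"

definition logistic_loss :: "real \<Rightarrow> real" where
  "logistic_loss r = ln (1 + exp (- r))"

definition emp_risk :: "real \<Rightarrow> nat \<Rightarrow> (nat \<Rightarrow> real) \<Rightarrow> nat \<Rightarrow> (nat \<Rightarrow> real^'d::finite) \<Rightarrow> (nat \<Rightarrow> real)
    \<Rightarrow> (nat \<times> 'd \<Rightarrow> real) \<Rightarrow> (nat \<times> 'd \<Rightarrow> real) \<Rightarrow> real" where
  "emp_risk \<rho> m a n xs ys V B =
     (1 / real n) * (\<Sum>k<n. logistic_loss (ys k * frob_inner m (grad_net \<rho> m a V (xs k)) B))"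

definition pop_risk :: "real \<Rightarrow> nat \<Rightarrow> (nat \<Rightarrow> real) \<Rightarrow> ((real^'d::finite) \<times> real) measure
    \<Rightarrow> (nat \<times> 'd \<Rightarrow> real) \<Rightarrow> real" where
  "pop_risk \<rho> m a \<mu> V = (\<integral>z. logistic_loss (snd z * relu_net \<rho> m a V (fst z)) \<partial>\<mu>)"

definition pop_risk0 :: "real \<Rightarrow> nat \<Rightarrow> (nat \<Rightarrow> real) \<Rightarrow> (nat \<times> 'd::finite \<Rightarrow> real) \<Rightarrow> ((real^'d) \<times> real) measure
    \<Rightarrow> (nat \<times> 'd \<Rightarrow> real) \<Rightarrow> real" where
  "pop_risk0 \<rho> m a W0 \<mu> V = (\<integral>z. logistic_loss (snd z * frob_inner m (grad_net \<rho> m a W0 (fst z)) V) \<partial>\<mu>)"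

definition init_measure :: "nat \<Rightarrow> ((nat \<Rightarrow> real) \<times> (nat \<times> 'd::finite \<Rightarrow> real)) measure" where
  "init_measure m =
     (PiM {..<m} (\<lambda>_. measure_pmf (pmf_of_set {-1, 1::real})))
     \<Otimes>\<^sub>M (PiM ({..<m} \<times> (UNIV :: 'd set)) (\<lambda>_. std_normal_distribution))"

text \<open>"With probability at least p, P holds": some measurable event of probability at least p
  on which P holds (inner probability; avoids measurability side conditions).\<close>
definition whp :: "'a measure \<Rightarrow> real \<Rightarrow> ('a \<Rightarrow> bool) \<Rightarrow> bool" where
  "whp M p P \<longleftrightarrow> (\<exists>E\<in>sets M. measure M E \<ge> p \<and> (\<forall>\<omega>\<in>E. P \<omega>))"

end

theory Submission
  imports Defs
begin

definition rowv :: "(nat \<times> 'd::finite \<Rightarrow> real) \<Rightarrow> nat \<Rightarrow> real^'d" where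
  "rowv W j = (\<chi> i. W (j, i))"

lemma row_dot_inner: "row_dot W j x = inner (rowv W j) x"
  by (simp add: row_dot_def rowv_def inner_vec_def)

lemma rowv_diff: "rowv (mat_diff A B) j = rowv A j - rowv B j"
  by (simp add: rowv_def mat_diff_def vec_eq_iff)

lemma row_dot_diff: "row_dot (mat_diff A B) j x = row_dot A j x - row_dot B j x"
  by (simp add: row_dot_inner rowv_diff inner_diff_left)

lemma norm_rowv_sq: "(norm (rowv W j))^2 = (\<Sum>i\<in>UNIV. (W (j,i))^2)"
  by (simp add: norm_vec_def L2_set_def rowv_def sum_nonneg)

lemma frob_inner_self: "frob_inner m A A = (\<Sum>j<m. (norm (rowv A j))^2)"
  unfolding frob_inner_def norm_rowv_sq by (simp add: power2_eq_square)

lemma frob_inner_self_nonneg: "frob_inner m A A \<ge> 0"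
  by (simp add: frob_inner_self sum_nonneg)

lemma frob_norm_sq: "(frob_norm m A)^2 = (\<Sum>j<m. (norm (rowv A j))^2)"
  by (simp add: frob_norm_def frob_inner_self sum_nonneg)

lemma frob_inner_grad:
  "frob_inner m (grad_net \<rho> m a V x) B =
     \<rho> / sqrt (real m) * (\<Sum>j<m. a j * (if row_dot V j x \<ge> 0 then 1 else 0) * row_dot B j x)"
proof -
  have "frob_inner m (grad_net \<rho> m a V x) B =
     (\<Sum>j<m. \<rho> / sqrt (real m) * (a j * (if row_dot V j x \<ge> 0 then 1 else 0) * row_dot B j x))"
    unfolding frob_inner_def
  proof (rule sum.cong[OF refl])
    fix j assume "j \<in> {..<m}"
    hence j: "j < m" by simp
    show "(\<Sum>i\<in>UNIV. grad_net \<rho> m a V x (j, i) * B (j, i)) =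
      \<rho> / sqrt (real m) * (a j * (if row_dot V j x \<ge> 0 then 1 else 0) * row_dot B j x)"
      unfolding grad_net_def row_dot_def using j
      by (simp add: sum_distrib_left sum_divide_distrib mult_ac)
  qed
  thus ?thesis by (simp add: sum_distrib_left)
qed

lemma frob_inner_diff_left:
  "frob_inner m (mat_diff A C) B = frob_inner m A B - frob_inner m C B"
  by (simp add: frob_inner_def mat_diff_def left_diff_distrib sum_subtractf)

lemma sign_flip_bound:
  fixes a b :: real
  assumes "(a \<ge> 0) \<noteq> (b \<ge> 0)"
  shows "\<bar>b\<bar> \<le> \<bar>a - b\<bar>"
  using assms by auto

definition flipset :: "nat \<Rightarrow> (nat \<times> 'd::finite \<Rightarrow> real) \<Rightarrow> (nat \<times> 'd \<Rightarrow> real) \<Rightarrow> real^'d \<Rightarrow> nat set" where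
  "flipset m V W x = {j. j < m \<and> (row_dot V j x \<ge> 0) \<noteq> (row_dot W j x \<ge> 0)}"

lemma sum_rows_le_frob:
  assumes "S \<subseteq> {..<m}"
  shows "(\<Sum>j\<in>S. norm (rowv A j)) \<le> sqrt (real (card S)) * frob_norm m A"
proof -
  have "(\<Sum>j\<in>S. norm (rowv A j)) = (\<Sum>j\<in>S. \<bar>1\<bar> * \<bar>norm (rowv A j)\<bar>)" by simp
  also have "\<dots> \<le> L2_set (\<lambda>_. 1::real) S * L2_set (\<lambda>j. norm (rowv A j)) S"
    by (rule L2_set_mult_ineq)
  also have "L2_set (\<lambda>_. 1::real) S = sqrt (real (card S))"
    by (simp add: L2_set_def)
  also have "L2_set (\<lambda>j. norm (rowv A j)) S \<le> L2_set (\<lambda>j. norm (rowv A j)) {..<m}"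
    unfolding L2_set_def by (intro real_sqrt_le_mono sum_mono2) (use assms in auto)
  also have "L2_set (\<lambda>j. norm (rowv A j)) {..<m} = frob_norm m A"
    by (simp add: L2_set_def frob_norm_def frob_inner_self)
  finally show ?thesis by (simp add: mult_left_mono)
qed

lemma core_det:
  assumes a: "\<And>j. j < m \<Longrightarrow> \<bar>a j\<bar> \<le> 1" and \<rho>: "\<rho> \<ge> 0"
    and V: "frob_norm m (mat_diff V W) \<le> RV" and B: "frob_norm m (mat_diff B W) \<le> RB"
  shows "\<bar>frob_inner m (mat_diff (grad_net \<rho> m a V x) (grad_net \<rho> m a W x)) B\<bar>
     \<le> \<rho> / sqrt (real m) * norm x * sqrt (real (card (flipset m V W x))) * (RV + RB)"
proof -
  let ?S = "flipset m V W x"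
  let ?c = "\<rho> / sqrt (real m)"
  have Ssub: "?S \<subseteq> {..<m}" by (auto simp: flipset_def)
  have fin: "finite ?S" using Ssub finite_subset by blast
  define t where "t j = a j * ((if row_dot V j x \<ge> 0 then 1 else 0) - (if row_dot W j x \<ge> 0 then 1 else 0)) * row_dot B j x" for j
  have eq: "frob_inner m (mat_diff (grad_net \<rho> m a V x) (grad_net \<rho> m a W x)) B = ?c * (\<Sum>j<m. t j)"
    by (simp add: frob_inner_diff_left frob_inner_grad t_def right_diff_distrib sum_subtractf algebra_simps)
  have "(\<Sum>j<m. t j) = (\<Sum>j\<in>?S. t j)"
    by (rule sum.mono_neutral_right) (auto simp: t_def flipset_def)
  hence "\<bar>\<Sum>j<m. t j\<bar> \<le> (\<Sum>j\<in>?S. \<bar>t j\<bar>)" by (simp add: sum_abs)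
  also have "\<dots> \<le> (\<Sum>j\<in>?S. norm x * norm (rowv (mat_diff V W) j) + norm x * norm (rowv (mat_diff B W) j))"
  proof (rule sum_mono)
    fix j assume j: "j \<in> ?S"
    hence jm: "j < m" and fl: "(row_dot V j x \<ge> 0) \<noteq> (row_dot W j x \<ge> 0)" by (auto simp: flipset_def)
    have "\<bar>t j\<bar> \<le> \<bar>row_dot B j x\<bar>"
      using a[OF jm] fl by (auto simp: t_def abs_mult mult_le_cancel_right2)
    also have "row_dot B j x = row_dot W j x + row_dot (mat_diff B W) j x"
      by (simp add: row_dot_diff)
    also have "\<bar>\<dots>\<bar> \<le> \<bar>row_dot (mat_diff V W) j x\<bar> + \<bar>row_dot (mat_diff B W) j x\<bar>"
      using sign_flip_bound[OF fl] by (simp add: row_dot_diff)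
    also have "\<dots> \<le> norm x * norm (rowv (mat_diff V W) j) + norm x * norm (rowv (mat_diff B W) j)"
      by (intro add_mono) (metis row_dot_inner Cauchy_Schwarz_ineq2 mult.commute)+
    finally show "\<bar>t j\<bar> \<le> \<dots>" .
  qed
  also have "\<dots> = norm x * ((\<Sum>j\<in>?S. norm (rowv (mat_diff V W) j)) + (\<Sum>j\<in>?S. norm (rowv (mat_diff B W) j)))"
    by (simp add: sum.distrib sum_distrib_left distrib_left)
  also have "\<dots> \<le> norm x * (sqrt (real (card ?S)) * RV + sqrt (real (card ?S)) * RB)"
    apply (intro mult_left_mono add_mono order.trans[OF sum_rows_le_frob[OF Ssub]])
    using V B by (auto intro: mult_left_mono)
  finally have tb: "\<bar>\<Sum>j<m. t j\<bar> \<le> norm x * sqrt (real (card ?S)) * (RV + RB)"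
    by (simp add: algebra_simps)
  hence "\<bar>?c\<bar> * \<bar>\<Sum>j<m. t j\<bar> \<le> ?c * (norm x * sqrt (real (card ?S)) * (RV + RB))"
  proof -
    have ce: "\<bar>?c\<bar> = ?c" using \<rho> by simp
    show ?thesis unfolding ce by (rule mult_left_mono[OF tb]) (use \<rho> in simp)
  qed
  thus ?thesis by (simp add: eq abs_mult mult_ac)
qed

lemma flipset_card_bound:
  assumes x: "x \<noteq> 0" and r: "r > 0" and V: "frob_norm m (mat_diff V W) \<le> RV"
  shows "real (card (flipset m V W x)) \<le> real (card {j. j < m \<and> \<bar>row_dot W j x\<bar> \<le> r * norm x}) + RV^2 / r^2"
proof -
  let ?S = "flipset m V W x"
  define S1 where "S1 = {j. j < m \<and> \<bar>row_dot W j x\<bar> \<le> r * norm x}"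
  define S2 where "S2 = {j\<in>?S. \<bar>row_dot W j x\<bar> > r * norm x}"
  have sub: "?S \<subseteq> S1 \<union> S2" by (auto simp: S1_def S2_def flipset_def)
  have fin1: "finite S1" by (auto simp: S1_def)
  have S2m: "S2 \<subseteq> {..<m}" by (auto simp: S2_def flipset_def)
  hence fin2: "finite S2" using finite_subset by blast
  have "card ?S \<le> card (S1 \<union> S2)" by (rule card_mono) (use fin1 fin2 sub in auto)
  also have "\<dots> \<le> card S1 + card S2" by (rule card_Un_le)
  finally have c1: "real (card ?S) \<le> real (card S1) + real (card S2)" by linarith
  have big: "r^2 < (norm (rowv (mat_diff V W) j))^2" if j: "j \<in> S2" for j
  proof -
    from j have fl: "(row_dot V j x \<ge> 0) \<noteq> (row_dot W j x \<ge> 0)" and gt: "\<bar>row_dot W j x\<bar> > r * norm x"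
      by (auto simp: S2_def flipset_def)
    have "r * norm x < \<bar>row_dot (mat_diff V W) j x\<bar>"
      using sign_flip_bound[OF fl] gt by (simp add: row_dot_diff)
    also have "\<dots> \<le> norm (rowv (mat_diff V W) j) * norm x"
      by (simp add: row_dot_inner Cauchy_Schwarz_ineq2)
    finally have "r < norm (rowv (mat_diff V W) j)" using x by (simp add: mult_less_cancel_right)
    thus ?thesis using r by (simp add: power_strict_mono)
  qed
  have "real (card S2) * r^2 = (\<Sum>j\<in>S2. r^2)" by simp
  also have "\<dots> \<le> (\<Sum>j\<in>S2. (norm (rowv (mat_diff V W) j))^2)"
    by (rule sum_mono) (use big in force)
  also have "\<dots> \<le> (\<Sum>j<m. (norm (rowv (mat_diff V W) j))^2)"
    by (rule sum_mono2) (use S2m in auto)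
  also have "\<dots> = (frob_norm m (mat_diff V W))^2" by (simp add: frob_norm_sq)
  also have "\<dots> \<le> RV^2"
    using V by (intro power_mono) (auto simp: frob_norm_def frob_inner_self_nonneg)
  finally have "real (card S2) \<le> RV^2 / r^2" using r by (simp add: pos_le_divide_eq)
  with c1 show ?thesis by (simp add: S1_def)
qed

abbreviation NW :: "nat \<Rightarrow> (nat \<times> 'd::finite \<Rightarrow> real) measure" where
  "NW m \<equiv> PiM ({..<m} \<times> UNIV) (\<lambda>_. std_normal_distribution)"

lemma prob_space_NW: "prob_space (NW m)"
  by (intro prob_space_PiM prob_space_normal_density) auto

lemma sets_std: "sets std_normal_distribution = sets borel" by simp
lemma space_std: "space std_normal_distribution = UNIV" by simp

lemma sets_NW: "sets (NW m) = sets (PiM ({..<m} \<times> (UNIV::'d::finite set)) (\<lambda>_. borel))"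
  by (intro sets_PiM_cong) simp_all

lemma coord_meas[measurable]: "k \<in> {..<m} \<times> UNIV \<Longrightarrow> (\<lambda>W. W k) \<in> borel_measurable (NW m)"
  by (subst measurable_cong_sets[OF sets_NW refl]) simp

lemma coord_distr:
  assumes "k \<in> {..<m} \<times> (UNIV::'d::finite set)"
  shows "distr (NW m :: (nat \<times> 'd \<Rightarrow> real) measure) borel (\<lambda>W. W k) = std_normal_distribution"
proof -
  have "distr (NW m :: (nat \<times> 'd \<Rightarrow> real) measure) borel (\<lambda>W. W k) = distr (NW m) std_normal_distribution (\<lambda>W. W k)"
    by (rule distr_cong) simp_all
  also have "\<dots> = std_normal_distribution"
    by (rule distr_PiM_component) (use assms prob_space_normal_density in auto)
  finally show ?thesis .
qed

lemma coord_distributed: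
  assumes "k \<in> {..<m} \<times> (UNIV::'d::finite set)"
  shows "distributed (NW m :: (nat \<times> 'd \<Rightarrow> real) measure) lborel (\<lambda>W. W k) (\<lambda>x. ennreal (std_normal_density x))"
  unfolding distributed_def
proof (intro conjI)
  have "distr (NW m :: (nat \<times> 'd \<Rightarrow> real) measure) lborel (\<lambda>W. W k) = distr (NW m :: (nat \<times> 'd \<Rightarrow> real) measure) borel (\<lambda>W. W k)"
    by (rule distr_cong) simp_all
  thus "distr (NW m :: (nat \<times> 'd \<Rightarrow> real) measure) lborel (\<lambda>W. W k) = density lborel (\<lambda>x. ennreal (std_normal_density x))"
    using coord_distr[OF assms] by simp
  show "(\<lambda>x. ennreal (std_normal_density x)) \<in> borel_measurable lborel" by simp
  show "(\<lambda>W. W k) \<in> measurable (NW m) lborel"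
    using coord_meas[OF assms] by simp
qed

lemma coords_indep:
  assumes m0: "m > 0"
  shows "prob_space.indep_vars (NW m :: (nat \<times> 'd::finite \<Rightarrow> real) measure) (\<lambda>_. borel) (\<lambda>k W. W k) ({..<m} \<times> UNIV)"
proof -
  have False: "m \<noteq> 0" using m0 by simp
  interpret P: prob_space "NW m :: (nat \<times> 'd \<Rightarrow> real) measure" by (rule prob_space_NW)
  have ne: "{..<m} \<times> (UNIV::'d set) \<noteq> {}" using False by auto
  show ?thesis
  proof (subst P.indep_vars_iff_distr_eq_PiM'[OF ne])
    show "(\<lambda>W. W k) \<in> measurable (NW m :: (nat \<times> 'd \<Rightarrow> real) measure) borel" if "k \<in> {..<m} \<times> UNIV" for k :: "nat \<times> 'd"
      using coord_meas[OF that] by simp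
    have "distr (NW m :: (nat \<times> 'd \<Rightarrow> real) measure) (Pi\<^sub>M ({..<m} \<times> UNIV) (\<lambda>i. borel)) (\<lambda>x. \<lambda>i\<in>{..<m} \<times> UNIV. x i)
        = distr (NW m) (NW m) (\<lambda>x. x)"
      by (rule distr_cong) (auto simp: sets_NW space_PiM)
    also have "\<dots> = NW m" by (rule distr_id)
    also have "\<dots> = Pi\<^sub>M ({..<m} \<times> UNIV) (\<lambda>i. distr (NW m :: (nat \<times> 'd \<Rightarrow> real) measure) borel (\<lambda>W. W i))"
      by (intro PiM_cong refl) (simp add: coord_distr)
    finally show "distr (NW m :: (nat \<times> 'd \<Rightarrow> real) measure) (Pi\<^sub>M ({..<m} \<times> UNIV) (\<lambda>i. borel)) (\<lambda>x. \<lambda>i\<in>{..<m} \<times> UNIV. x i)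
        = Pi\<^sub>M ({..<m} \<times> UNIV) (\<lambda>i. distr (NW m :: (nat \<times> 'd \<Rightarrow> real) measure) borel (\<lambda>W. W i))" .
  qed
qed

lemma vec_measurable:
  fixes f :: "'a \<Rightarrow> real^'d::finite"
  assumes "\<And>i. (\<lambda>x. f x $ i) \<in> borel_measurable M"
  shows "f \<in> borel_measurable M"
  by (subst borel_measurable_euclidean_space) (auto simp: Basis_vec_def inner_axis assms)

lemma rowv_meas[measurable]:
  "j < m \<Longrightarrow> (\<lambda>W. rowv W j) \<in> borel_measurable (NW m :: (nat \<times> 'd::finite \<Rightarrow> real) measure)"
  by (rule vec_measurable) (simp add: rowv_def)

lemma rows_indep:
  assumes m0: "m > 0" and Q: "Q \<in> sets (borel :: (real^'d::finite) measure)"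
  shows "prob_space.indep_vars (NW m :: (nat \<times> 'd \<Rightarrow> real) measure) (\<lambda>_. borel)
           (\<lambda>j W. indicator Q (rowv W j) :: real) {..<m}"
proof -
  interpret P: prob_space "NW m :: (nat \<times> 'd \<Rightarrow> real) measure" by (rule prob_space_NW)
  define K where "K j = {j} \<times> (UNIV :: 'd set)" for j :: nat
  have ind: "P.indep_vars (\<lambda>j. PiM (K j) (\<lambda>_. borel)) (\<lambda>j W. restrict (\<lambda>k. W k) (K j)) {..<m}"
    by (rule P.indep_vars_restrict[OF coords_indep[OF m0]]) (auto simp: K_def disjoint_family_on_def)
  define Y where "Y j r = (indicator Q (\<chi> i. r (j, i)) :: real)" for j and r :: "nat \<times> 'd \<Rightarrow> real"
  have Ym: "Y j \<in> borel_measurable (PiM (K j) (\<lambda>_. borel))" if "j \<in> {..<m}" for j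
  proof -
    have "(\<lambda>r::nat \<times> 'd \<Rightarrow> real. \<chi> i. r (j, i)) \<in> borel_measurable (PiM (K j) (\<lambda>_. borel))"
      by (rule vec_measurable) (simp add: K_def)
    thus ?thesis unfolding Y_def using Q by measurable
  qed
  have "P.indep_vars (\<lambda>_. borel) (\<lambda>j W. Y j (restrict (\<lambda>k. W k) (K j))) {..<m}"
    by (rule P.indep_vars_compose2[OF ind Ym])
  moreover have "Y j (restrict (\<lambda>k. W k) (K j)) = indicator Q (rowv W j)" for j W
    by (simp add: Y_def K_def rowv_def)
  ultimately show ?thesis by simp
qed

lemma sum_indicator_card:
  fixes m :: nat
  shows "(\<Sum>j<m. indicator Q (f j) :: real) = real (card {j. j < m \<and> f j \<in> Q})"
proof -
  have "(\<Sum>j<m. indicator Q (f j) :: real) = (\<Sum>j<m. if f j \<in> Q then 1 else 0)"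
    by (intro sum.cong) (auto simp: indicator_def)
  also have "\<dots> = (\<Sum>j\<in>{j\<in>{..<m}. f j \<in> Q}. 1)"
    by (rule sum.inter_filter[symmetric]) simp
  also have "{j\<in>{..<m}. f j \<in> Q} = {j. j < m \<and> f j \<in> Q}" by auto
  finally show ?thesis by simp
qed

lemma count_hoeffding:
  fixes Q :: "(real^'d::finite) set"
  assumes m0: "m > 0" and \<delta>: "0 < \<delta>" "\<delta> \<le> 1" and Q: "Q \<in> sets borel"
    and p: "\<And>j. j < m \<Longrightarrow> measure (NW m :: (nat \<times> 'd \<Rightarrow> real) measure) {W \<in> space (NW m). rowv W j \<in> Q} \<le> p"
  shows "\<exists>E \<in> sets (NW m :: (nat \<times> 'd \<Rightarrow> real) measure). measure (NW m) E \<ge> 1 - \<delta> \<and>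
     (\<forall>W\<in>E. real (card {j. j < m \<and> rowv W j \<in> Q}) \<le> real m * p + sqrt (real m * ln (1 / \<delta>) / 2))"
proof -
  interpret P: prob_space "NW m :: (nat \<times> 'd \<Rightarrow> real) measure" by (rule prob_space_NW)
  define X where "X j W = (indicator Q (rowv W j) :: real)" for j and W :: "nat \<times> 'd \<Rightarrow> real"
  define \<mu> where "\<mu> = (\<Sum>j<m. P.expectation (X j))"
  interpret H: Hoeffding_ineq "NW m :: (nat \<times> 'd \<Rightarrow> real) measure" "{..<m}" X "\<lambda>_. 0" "\<lambda>_. 1" \<mu>
    by unfold_locales (auto simp: X_def \<mu>_def rows_indep[OF m0 Q, unfolded X_def[symmetric]])
  define \<epsilon> where "\<epsilon> = sqrt (real m * ln (1 / \<delta>) / 2)"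
  have ln0: "ln (1 / \<delta>) \<ge> 0" using \<delta> by simp
  have eps0: "\<epsilon> \<ge> 0" using ln0 by (simp add: \<epsilon>_def)
  have eps2: "\<epsilon>^2 = real m * ln (1 / \<delta>) / 2" using ln0 by (simp add: \<epsilon>_def)
  define F where "F = {W \<in> space (NW m :: (nat \<times> 'd \<Rightarrow> real) measure). (\<Sum>j<m. X j W) \<ge> \<mu> + \<epsilon>}"
  have Xm[measurable]: "X j \<in> borel_measurable (NW m)" if "j < m" for j
    unfolding X_def using that Q by measurable
  have Fm: "F \<in> sets (NW m)" unfolding F_def by measurable
  have "P.prob F \<le> exp (-2 * \<epsilon>^2 / (\<Sum>i<m. (1 - 0)^2))"
    unfolding F_def by (rule H.Hoeffding_ineq_ge[OF eps0]) (use m0 in simp)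
  also have "\<dots> = \<delta>"
    using m0 \<delta> by (simp add: eps2 ln_div)
  finally have PF: "P.prob F \<le> \<delta>" .
  define E where "E = space (NW m) - F"
  have Em: "E \<in> sets (NW m)" unfolding E_def using Fm by auto
  have "P.prob E = 1 - P.prob F" unfolding E_def by (rule P.prob_compl[OF Fm])
  hence PE: "P.prob E \<ge> 1 - \<delta>" using PF by simp
  have EX: "P.expectation (X j) \<le> p" if j: "j < m" for j
  proof -
    have "P.expectation (X j) = P.expectation (indicator {W \<in> space (NW m). rowv W j \<in> Q})"
      by (rule Bochner_Integration.integral_cong) (auto simp: X_def indicator_def)
    also have "\<dots> = P.prob {W \<in> space (NW m). rowv W j \<in> Q}"
    proof -
      have "{W \<in> space (NW m :: (nat \<times> 'd \<Rightarrow> real) measure). rowv W j \<in> Q} \<in> sets (NW m)"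
        using j Q by measurable
      thus ?thesis by simp
    qed
    finally show ?thesis using p[OF j] by simp
  qed
  have mu: "\<mu> \<le> real m * p"
  proof -
    have "\<mu> \<le> (\<Sum>j<m. p)" unfolding \<mu>_def by (rule sum_mono) (use EX in auto)
    thus ?thesis by simp
  qed
  show ?thesis
  proof (intro bexI conjI ballI)
    show "E \<in> sets (NW m)" by (rule Em)
    show "1 - \<delta> \<le> P.prob E" by (rule PE)
    fix W assume "W \<in> E"
    hence "(\<Sum>j<m. X j W) < \<mu> + \<epsilon>" by (auto simp: E_def F_def)
    hence "real (card {j. j < m \<and> rowv W j \<in> Q}) < \<mu> + \<epsilon>"
      by (simp add: X_def sum_indicator_card)
    thus "real (card {j. j < m \<and> rowv W j \<in> Q}) \<le> real m * p + sqrt (real m * ln (1 / \<delta>) / 2)"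
      using mu by (simp add: \<epsilon>_def)
  qed
qed

lemma normal_density_le: "\<sigma> > 0 \<Longrightarrow> normal_density 0 \<sigma> x \<le> 1 / sqrt (2 * pi * \<sigma>^2)"
  unfolding normal_density_def by (rule mult_left_le) auto

lemma normal_interval_bound:
  assumes \<sigma>: "\<sigma> > 0" and t: "t \<ge> 0"
  shows "emeasure (density lborel (\<lambda>x. ennreal (normal_density 0 \<sigma> x))) {-t..t} \<le> ennreal (t / \<sigma>)"
proof -
  let ?c = "1 / sqrt (2 * pi * \<sigma>^2)"
  have "emeasure (density lborel (\<lambda>x. ennreal (normal_density 0 \<sigma> x))) {-t..t}
      = (\<integral>\<^sup>+ x. ennreal (normal_density 0 \<sigma> x) * indicator {-t..t} x \<partial>lborel)"
    by (rule emeasure_density) auto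
  also have "\<dots> \<le> (\<integral>\<^sup>+ x. ennreal ?c * indicator {-t..t} x \<partial>lborel)"
    by (intro nn_integral_mono mult_right_mono ennreal_leI normal_density_le[OF \<sigma>]) auto
  also have "\<dots> = ennreal ?c * emeasure lborel {-t..t}"
    by (rule nn_integral_cmult_indicator) simp
  also have "\<dots> = ennreal (?c * (2 * t))"
    using t by (subst ennreal_mult) auto
  also have "?c * (2 * t) \<le> t / \<sigma>"
  proof -
    have "sqrt (2 * pi * \<sigma>^2) = sqrt (2 * pi) * \<sigma>" using \<sigma> by (simp add: real_sqrt_mult)
    moreover have "sqrt (2 * pi) \<ge> 2"
    proof -
      have "(2::real) = sqrt 4" by simp
      also have "\<dots> \<le> sqrt (2 * pi)" using pi_gt3 by (intro real_sqrt_le_mono) simp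
      finally show ?thesis .
    qed
    ultimately show ?thesis using \<sigma> t by (simp add: field_simps mult_left_mono)
  qed
  hence "ennreal (?c * (2 * t)) \<le> ennreal (t / \<sigma>)" by (rule ennreal_leI)
  finally show ?thesis .
qed

lemma row_coords_indep:
  assumes j: "j < m"
  shows "prob_space.indep_vars (NW m :: (nat \<times> 'd::finite \<Rightarrow> real) measure) (\<lambda>_. borel) (\<lambda>i W. W (j, i)) (UNIV :: 'd set)"
proof -
  interpret P: prob_space "NW m :: (nat \<times> 'd \<Rightarrow> real) measure" by (rule prob_space_NW)
  show ?thesis
  proof (subst P.indep_vars_iff_distr_eq_PiM')
    show "(\<lambda>W. W (j, i)) \<in> measurable (NW m :: (nat \<times> 'd \<Rightarrow> real) measure) borel" for i :: 'd
      using coord_meas[of "(j, i)" m] j by simp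
    have "distr (NW m :: (nat \<times> 'd \<Rightarrow> real) measure) (Pi\<^sub>M UNIV (\<lambda>i. borel)) (\<lambda>x. \<lambda>i\<in>UNIV. x (j, i))
        = distr (NW m :: (nat \<times> 'd \<Rightarrow> real) measure) (Pi\<^sub>M UNIV (\<lambda>i. std_normal_distribution)) (\<lambda>x. \<lambda>i\<in>UNIV. x (j, i))"
      by (rule distr_cong) (auto intro!: sets_PiM_cong)
    also have "\<dots> = Pi\<^sub>M UNIV (\<lambda>i. std_normal_distribution)"
      using distr_PiM_reindex[of "{..<m} \<times> (UNIV :: 'd set)" "\<lambda>_. std_normal_distribution" "\<lambda>i. (j, i)" UNIV]
      using j prob_space_normal_density by (auto simp: inj_on_def)
    also have "\<dots> = Pi\<^sub>M UNIV (\<lambda>i. distr (NW m :: (nat \<times> 'd \<Rightarrow> real) measure) borel (\<lambda>W. W (j, i)))"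
      by (intro PiM_cong refl) (use j in \<open>simp add: coord_distr\<close>)
    finally show "distr (NW m :: (nat \<times> 'd \<Rightarrow> real) measure) (Pi\<^sub>M UNIV (\<lambda>i. borel)) (\<lambda>x. \<lambda>i\<in>UNIV. x (j, i))
        = Pi\<^sub>M UNIV (\<lambda>i. distr (NW m :: (nat \<times> 'd \<Rightarrow> real) measure) borel (\<lambda>W. W (j, i)))" .
  qed simp
qed

lemma anticonc:
  fixes y :: "real^'d::finite"
  assumes j: "j < m" and y: "y \<noteq> 0" and t: "t \<ge> 0"
  shows "measure (NW m :: (nat \<times> 'd \<Rightarrow> real) measure) {W \<in> space (NW m). \<bar>inner (rowv W j) y\<bar> \<le> t} \<le> t / norm y"
proof -
  interpret P: prob_space "NW m :: (nat \<times> 'd \<Rightarrow> real) measure" by (rule prob_space_NW)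
  define I where "I = {i. y $ i \<noteq> 0}"
  have Ine: "I \<noteq> {}" using y by (auto simp: I_def vec_eq_iff)
  have Ifin: "finite I" by simp
  define Z where "Z W = (\<Sum>i\<in>I. y $ i * W (j, i))" for W :: "nat \<times> 'd \<Rightarrow> real"
  have Zeq: "inner (rowv W j) y = Z W" for W
  proof -
    have "inner (rowv W j) y = (\<Sum>i\<in>UNIV. y $ i * W (j, i))"
      by (simp add: inner_vec_def rowv_def mult.commute)
    also have "\<dots> = Z W" unfolding Z_def
      by (rule sum.mono_neutral_right) (auto simp: I_def)
    finally show ?thesis .
  qed
  have ind: "P.indep_vars (\<lambda>_. borel) (\<lambda>i W. y $ i * W (j, i)) I"
    using P.indep_vars_compose2[OF P.indep_vars_subset[OF row_coords_indep[OF j] subset_UNIV], where Y="\<lambda>i x. y $ i * x" and N="\<lambda>_. borel"]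
    by simp
  have dist_i: "distributed (NW m) lborel (\<lambda>W. y $ i * W (j, i)) (\<lambda>x. ennreal (normal_density 0 \<bar>y $ i\<bar> x))"
    if "i \<in> I" for i
    using P.normal_density_affine[OF coord_distributed[of "(j, i)" m], where \<alpha>="y $ i" and \<beta>=0] j that
    by (simp add: I_def)
  have dZ: "distributed (NW m) lborel Z (\<lambda>x. ennreal (normal_density 0 (sqrt (\<Sum>i\<in>I. \<bar>y $ i\<bar>^2)) x))"
    using P.sum_indep_normal[OF Ifin Ine ind, of "\<lambda>i. \<bar>y $ i\<bar>" "\<lambda>_. 0"] dist_i
    by (simp add: I_def Z_def[abs_def])
  have sig: "sqrt (\<Sum>i\<in>I. \<bar>y $ i\<bar>^2) = norm y"
  proof -
    have "(\<Sum>i\<in>I. \<bar>y $ i\<bar>^2) = (\<Sum>i\<in>I. (y $ i)^2)" by simp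
    also have "\<dots> = (\<Sum>i\<in>UNIV. (y $ i)^2)"
      by (rule sum.mono_neutral_left) (auto simp: I_def)
    thus ?thesis by (simp add: norm_vec_def L2_set_def)
  qed
  have ny: "norm y > 0" using y by simp
  have Zm: "Z \<in> measurable (NW m) lborel" using dZ by (simp add: distributed_def)
  have "emeasure (NW m) {W \<in> space (NW m). \<bar>inner (rowv W j) y\<bar> \<le> t}
      = emeasure (NW m) (Z -` {-t..t} \<inter> space (NW m))"
    by (intro arg_cong[where f="emeasure (NW m)"]) (auto simp: Zeq)
  also have "\<dots> = emeasure (distr (NW m) lborel Z) {-t..t}"
    by (rule emeasure_distr[symmetric, OF Zm]) simp
  also have "\<dots> = emeasure (density lborel (\<lambda>x. ennreal (normal_density 0 (norm y) x))) {-t..t}"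
    using dZ sig by (simp add: distributed_def)
  also have "\<dots> \<le> ennreal (t / norm y)"
    by (rule normal_interval_bound[OF ny t])
  finally show ?thesis
    using t ny by (simp add: P.emeasure_eq_measure)
qed

lemma coord_sq_integrable:
  assumes "k \<in> {..<m} \<times> (UNIV::'d::finite set)"
  shows "integrable (NW m :: (nat \<times> 'd \<Rightarrow> real) measure) (\<lambda>W. (W k)^2)"
    and "(\<integral>W. (W k)^2 \<partial>(NW m :: (nat \<times> 'd \<Rightarrow> real) measure)) = 1"
proof -
  have m: "(\<lambda>W. W k) \<in> measurable (NW m :: (nat \<times> 'd \<Rightarrow> real) measure) borel" using coord_meas[OF assms] .
  have i: "integrable std_normal_distribution (\<lambda>x. x^2)"
    using integrable_std_normal_distribution_moment[of 2] .
  thus "integrable (NW m :: (nat \<times> 'd \<Rightarrow> real) measure) (\<lambda>W. (W k)^2)"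
    using integrable_distr_eq[OF m, of "\<lambda>x. x^2"] coord_distr[OF assms] by simp
  have "(\<integral>W. (W k)^2 \<partial>(NW m :: (nat \<times> 'd \<Rightarrow> real) measure)) = (\<integral>x. x^2 \<partial>(distr (NW m :: (nat \<times> 'd \<Rightarrow> real) measure) borel (\<lambda>W. W k)))"
    by (rule integral_distr[symmetric, OF m]) simp
  also have "\<dots> = (\<integral>x. x^(2*1) \<partial>std_normal_distribution)" using coord_distr[OF assms] by simp
  also have "\<dots> = 1" by (subst std_normal_distribution_even_moments(1)) simp
  finally show "(\<integral>W. (W k)^2 \<partial>(NW m :: (nat \<times> 'd \<Rightarrow> real) measure)) = 1" .
qed

lemma rownorm_tail:
  assumes j: "j < m" and K: "K > 0"
  shows "measure (NW m :: (nat \<times> 'd::finite \<Rightarrow> real) measure) {W \<in> space (NW m). norm (rowv W j) > K}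
           \<le> real CARD('d) / K^2"
proof -
  interpret P: prob_space "NW m :: (nat \<times> 'd \<Rightarrow> real) measure" by (rule prob_space_NW)
  define u where "u W = (\<Sum>i\<in>UNIV. (W (j, i))^2)" for W :: "nat \<times> 'd \<Rightarrow> real"
  have ui: "integrable (NW m) u" unfolding u_def
    by (intro Bochner_Integration.integrable_sum coord_sq_integrable(1)) (use j in auto)
  have e1: "P.expectation (\<lambda>W. (W (j, i))^2) = 1" for i :: 'd
    using coord_sq_integrable(2)[of "(j, i)" m] j by simp
  have ue: "P.expectation u = real CARD('d)" unfolding u_def
    by (subst Bochner_Integration.integral_sum) (use j coord_sq_integrable e1 in auto)
  have "P.prob {W \<in> space (NW m). norm (rowv W j) > K} \<le> P.prob {W \<in> space (NW m). u W \<ge> K^2}"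
  proof (rule P.finite_measure_mono)
    show "{W \<in> space (NW m). norm (rowv W j) > K} \<subseteq> {W \<in> space (NW m). u W \<ge> K^2}"
    proof safe
      fix W :: "nat \<times> 'd \<Rightarrow> real" assume "K < norm (rowv W j)"
      hence "K^2 \<le> (norm (rowv W j))^2" using K by (intro power_mono) auto
      thus "K^2 \<le> u W" by (simp add: u_def norm_rowv_sq)
    qed
    show "{W \<in> space (NW m). u W \<ge> K^2} \<in> sets (NW m)"
      using ui by measurable
  qed
  also have "\<dots> \<le> P.expectation u / K^2"
    by (rule integral_Markov_inequality_measure[OF ui]) (use K in \<open>auto simp: u_def sum_nonneg\<close>)
  finally show ?thesis by (simp add: ue)
qed

abbreviation AM :: "nat \<Rightarrow> (nat \<Rightarrow> real) measure" where
  "AM m \<equiv> PiM {..<m} (\<lambda>_. measure_pmf (pmf_of_set {-1, 1::real}))"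

lemma init_measure_eq: "init_measure m = AM m \<Otimes>\<^sub>M (NW m :: (nat \<times> 'd::finite \<Rightarrow> real) measure)"
  by (simp add: init_measure_def)

lemma lift_event:
  assumes E: "E \<in> sets (NW m :: (nat \<times> 'd::finite \<Rightarrow> real) measure)" and q: "measure (NW m) E \<ge> q"
  shows "\<exists>F \<in> sets (init_measure m :: ((nat \<Rightarrow> real) \<times> (nat \<times> 'd \<Rightarrow> real)) measure).
           measure (init_measure m) F \<ge> q \<and> (\<forall>(a, W)\<in>F. (\<forall>j<m. a j \<in> {-1, 1}) \<and> W \<in> E)"
proof -
  interpret P: prob_space "NW m :: (nat \<times> 'd \<Rightarrow> real) measure" by (rule prob_space_NW)
  interpret A: product_prob_space "\<lambda>_. measure_pmf (pmf_of_set {-1, 1::real})" "{..<m}"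
    by (intro product_prob_spaceI) (simp add: measure_pmf.prob_space_axioms)
  define S where "S = Pi\<^sub>E {..<m} (\<lambda>_. {-1, 1::real})"
  have Ssets: "S \<in> sets (AM m)" unfolding S_def by (intro sets_PiM_I_finite) auto
  have "emeasure (AM m) S = (\<Prod>i\<in>{..<m}. emeasure (measure_pmf (pmf_of_set {-1, 1::real})) {-1, 1})"
    unfolding S_def by (rule A.emeasure_PiM) auto
  also have "\<dots> = 1"
  proof -
    have "measure (measure_pmf (pmf_of_set {-1, 1::real})) {-1, 1} = 1"
      by (subst measure_pmf_of_set) auto
    hence "emeasure (measure_pmf (pmf_of_set {-1, 1::real})) {-1, 1} = 1"
      by (simp add: measure_pmf.emeasure_eq_measure)
    thus ?thesis by simp
  qed
  finally have S1: "emeasure (AM m) S = 1" .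
  have "emeasure (init_measure m :: ((nat \<Rightarrow> real) \<times> (nat \<times> 'd \<Rightarrow> real)) measure) (S \<times> E)
      = emeasure (AM m) S * emeasure (NW m :: (nat \<times> 'd \<Rightarrow> real) measure) E"
    unfolding init_measure_eq by (rule P.emeasure_pair_measure_Times[OF Ssets E])
  also have "\<dots> = emeasure (NW m :: (nat \<times> 'd \<Rightarrow> real) measure) E" by (simp add: S1)
  finally have mS: "measure (init_measure m :: ((nat \<Rightarrow> real) \<times> (nat \<times> 'd \<Rightarrow> real)) measure) (S \<times> E)
       = measure (NW m :: (nat \<times> 'd \<Rightarrow> real) measure) E"
    by (simp add: measure_def)
  have sS: "S \<times> E \<in> sets (init_measure m :: ((nat \<Rightarrow> real) \<times> (nat \<times> 'd \<Rightarrow> real)) measure)"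
    unfolding init_measure_eq using Ssets E by simp
  have pS: "\<forall>(a, W)\<in>S \<times> E. (\<forall>j<m. a j \<in> {-1, 1}) \<and> W \<in> E"
    by (auto simp: S_def PiE_iff)
  show ?thesis
    by (rule bexI[of _ "S \<times> E"]) (use mS sS pS q in auto)
qed

lemma inter_bound:
  assumes P: "prob_space M" and I: "finite I"
    and E: "\<And>i. i \<in> I \<Longrightarrow> E i \<in> sets M" and Ep: "\<And>i. i \<in> I \<Longrightarrow> measure M (E i) \<ge> 1 - \<delta>"
  shows "space M \<inter> (\<Inter>i\<in>I. E i) \<in> sets M \<and> measure M (space M \<inter> (\<Inter>i\<in>I. E i)) \<ge> 1 - real (card I) * \<delta>"
proof -
  interpret P: prob_space M by (rule P)
  have eq: "space M - (space M \<inter> (\<Inter>i\<in>I. E i)) = (\<Union>i\<in>I. space M - E i)" by auto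
  have S: "space M \<inter> (\<Inter>i\<in>I. E i) \<in> sets M"
  proof (cases "I = {}")
    case True thus ?thesis by simp
  next
    case False
    have "(\<Inter>i\<in>I. E i) \<in> sets M" by (rule sets.finite_INT) (use I E False in auto)
    thus ?thesis by (rule sets.Int[OF sets.top])
  qed
  have "P.prob (\<Union>i\<in>I. space M - E i) \<le> (\<Sum>i\<in>I. P.prob (space M - E i))"
    by (rule P.finite_measure_subadditive_finite) (use I E in auto)
  also have "\<dots> = (\<Sum>i\<in>I. 1 - P.prob (E i))"
    by (intro sum.cong refl P.prob_compl E)
  also have "\<dots> \<le> (\<Sum>i\<in>I. \<delta>)" by (intro sum_mono) (use Ep in force)
  finally have "P.prob (\<Union>i\<in>I. space M - E i) \<le> real (card I) * \<delta>" by simp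
  moreover have "P.prob (space M \<inter> (\<Inter>i\<in>I. E i)) = 1 - P.prob (\<Union>i\<in>I. space M - E i)"
    using P.prob_compl[OF S] eq by simp
  ultimately show ?thesis using S by simp
qed

lemma powr_root_pow:
  fixes x :: real
  assumes "x > 0" "n > 0"
  shows "(x powr (1 / real n))^n = x"
proof -
  have "(x powr (1 / real n))^n = (x powr (1 / real n)) powr (real n)"
    using assms by (simp add: powr_realpow)
  also have "\<dots> = x" using assms by (simp add: powr_powr)
  finally show ?thesis .
qed

lemma arith1:
  fixes m RV RB \<rho> nx \<delta> c r :: real
  assumes m: "m \<ge> 1" and RV: "RV \<ge> 1" and RB: "RB \<ge> 0" and \<rho>: "\<rho> > 0" and nx: "nx \<ge> 0"
    and \<delta>: "0 < \<delta>" "\<delta> \<le> 1" and c0: "c \<ge> 0"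
    and r: "r = RV powr (2/3) / m powr (1/3)"
    and c: "c \<le> m * r + sqrt (m * ln (1 / \<delta>) / 2) + RV^2 / r^2"
  shows "\<rho> / sqrt m * nx * sqrt c * (RV + RB)
     \<le> 3 * \<rho> * nx * (RB + 2 * RV) * RV powr (1/3) * ln (exp 1 / \<delta>) powr (1/4) / m powr (1/6)"
proof -
  define L where "L = ln (exp 1 / \<delta>)"
  have lnd: "ln (1 / \<delta>) \<ge> 0" using \<delta> by simp
  have L: "L = 1 + ln (1 / \<delta>)" using \<delta> by (simp add: L_def ln_div)
  hence L1: "L \<ge> 1" using lnd by simp
  define u where "u = m powr (1/6)"
  define s where "s = RV powr (1/3)"
  define l where "l = L powr (1/4)"
  have u1: "u \<ge> 1" using m by (simp add: u_def ge_one_powr_ge_zero)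
  have s1: "s \<ge> 1" using RV by (simp add: s_def ge_one_powr_ge_zero)
  have l1: "l \<ge> 1" using L1 by (simp add: l_def ge_one_powr_ge_zero)
  have mu: "m = u^6" using powr_root_pow[of m 6] m by (simp add: u_def)
  have RVs: "RV = s^3" using powr_root_pow[of RV 3] RV by (simp add: s_def)
  have Ll: "L = l^4" using powr_root_pow[of L 4] L1 by (simp add: l_def)
  have m13: "m powr (1/3) = u^2"
  proof -
    have "m powr (1/3) = (m powr (1/6)) powr 2" using m by (simp add: powr_powr)
    also have "\<dots> = u^2" using m by (simp add: u_def powr_realpow)
    finally show ?thesis .
  qed
  have sm: "sqrt m = u^3"
  proof -
    have "sqrt m = m powr (1/2)" using m by (simp add: powr_half_sqrt)
    also have "\<dots> = (m powr (1/6)) powr 3" using m by (simp add: powr_powr)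
    also have "\<dots> = u^3" using m by (simp add: u_def powr_realpow)
    finally show ?thesis .
  qed
  have RV23: "RV powr (2/3) = s^2"
  proof -
    have "RV powr (2/3) = (RV powr (1/3)) powr 2" using RV by (simp add: powr_powr)
    also have "\<dots> = s^2" using RV by (simp add: s_def powr_realpow)
    finally show ?thesis .
  qed
  have rr: "r = s^2 / u^2" using r m13 RV23 by simp
  have t1: "m * r = s^2 * u^4" using rr mu u1 by (simp add: field_simps power_eq_if)
  have t2: "RV^2 / r^2 = s^2 * u^4"
  proof -
    have "RV^2 / r^2 = (s^3)^2 / (s^2 / u^2)^2" by (simp add: RVs rr)
    also have "\<dots> = s^2 * u^4" using s1 u1 by (simp add: power_divide field_simps eval_nat_numeral)
    finally show ?thesis .
  qed
  have t3: "sqrt (m * ln (1 / \<delta>) / 2) \<le> u^3 * l^2"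
  proof -
    have "m * ln (1 / \<delta>) / 2 \<le> u^6 * l^4" using L Ll mu lnd u1 by (simp add: mult_left_mono)
    hence "sqrt (m * ln (1 / \<delta>) / 2) \<le> sqrt ((u^3 * l^2)^2)"
      by (simp add: power_mult_distrib power_mult[symmetric])
    thus ?thesis using u1 l1 by simp
  qed
  have "c \<le> 2 * s^2 * u^4 + u^3 * l^2" using c t1 t2 t3 by simp
  also have "\<dots> \<le> 3 * s^2 * u^4 * l^2"
  proof -
    have a: "s^2 * u^4 \<le> s^2 * u^4 * l^2" using l1 s1 u1 by (simp add: one_le_power)
    have b: "u^3 * l^2 \<le> s^2 * u^4 * l^2"
    proof -
      have "u^3 \<le> s^2 * u^4"
      proof -
        have "u^3 \<le> u^4" using u1 by (rule power_increasing[rotated]) simp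
        also have "\<dots> \<le> s^2 * u^4" using s1 u1 by (simp add: one_le_power)
        finally show ?thesis .
      qed
      thus ?thesis using l1 by (simp add: mult_right_mono)
    qed
    show ?thesis using a b by simp
  qed
  finally have cb: "c \<le> (sqrt 3 * s * u^2 * l)^2"
    by (simp add: power_mult_distrib power_mult[symmetric] mult_ac)
  have sc: "sqrt c \<le> sqrt 3 * s * u^2 * l"
    using real_sqrt_le_mono[OF cb] s1 u1 l1 by simp
  have "\<rho> / sqrt m * nx * sqrt c * (RV + RB) = (\<rho> * nx * (RV + RB) / u^3) * sqrt c"
    by (simp add: sm)
  also have "\<dots> \<le> (\<rho> * nx * (RV + RB) / u^3) * (sqrt 3 * s * u^2 * l)"
    using sc \<rho> nx RV RB u1 by (intro mult_left_mono) auto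
  also have "\<dots> = sqrt 3 * \<rho> * nx * (RV + RB) * s * l / u"
    using u1 by (simp add: field_simps power_eq_if)
  also have "\<dots> \<le> 3 * \<rho> * nx * (RB + 2 * RV) * s * l / u"
  proof -
    have "sqrt 3 \<le> sqrt (9::real)" by (rule real_sqrt_le_mono) simp
    hence "sqrt 3 \<le> (3::real)" by simp
    hence "sqrt 3 * (RV + RB) \<le> 3 * (RB + 2 * RV)" using RV RB
      by (intro mult_mono) auto
    hence "sqrt 3 * (RV + RB) * (\<rho> * nx * s * l / u) \<le> 3 * (RB + 2 * RV) * (\<rho> * nx * s * l / u)"
      using \<rho> nx s1 l1 u1 by (intro mult_right_mono) auto
    thus ?thesis by (simp add: mult_ac)
  qed
  also have "\<dots> = 3 * \<rho> * nx * (RB + 2 * RV) * RV powr (1/3) * ln (exp 1 / \<delta>) powr (1/4) / m powr (1/6)"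
    by (simp add: s_def l_def u_def L_def)
  finally show ?thesis .
qed

lemma arith3:
  fixes m RV \<rho> nx \<delta> c r K \<epsilon> dd :: real
  assumes m: "m \<ge> 1" and RV: "RV \<ge> 1" and \<rho>: "\<rho> > 0" and nx: "nx \<ge> 0" "nx \<le> 1"
    and \<delta>: "0 < \<delta>" "\<delta> \<le> 1" and dd: "dd \<ge> 1" and c0: "c \<ge> 0"
    and r: "r = RV powr (2/3) / m powr (1/3)"
    and K: "K = sqrt dd * m powr (1/3)" and \<epsilon>: "\<epsilon> = sqrt dd / (2 * dd * m)"
    and c: "c \<le> m * (2 * (r + \<epsilon> * K) + dd / K^2) + sqrt (m * ln (1 / \<delta>) / 2) + RV^2 / r^2"
  shows "\<rho> / sqrt m * nx * sqrt c * (RV + RV)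
     \<le> 25 * \<rho> * RV powr (4/3) * sqrt (ln (exp 1 * dd * m / \<delta>)) / m powr (1/6)"
proof -
  define \<Lambda> where "\<Lambda> = ln (exp 1 * dd * m / \<delta>)"
  have lnd: "ln (1 / \<delta>) \<ge> 0" using \<delta> by simp
  have \<Lambda>eq: "\<Lambda> = 1 + ln dd + ln m + ln (1 / \<delta>)"
    using \<delta> dd m by (simp add: \<Lambda>_def ln_div ln_mult)
  have lnm: "ln m \<ge> 0" "ln dd \<ge> 0" using m dd by auto
  have \<Lambda>1: "\<Lambda> \<ge> 1 + ln (1 / \<delta>)" using \<Lambda>eq lnm by simp
  define l where "l = sqrt \<Lambda>"
  have l1: "l \<ge> 1" using \<Lambda>1 lnd by (simp add: l_def)
  have Ll: "\<Lambda> = l^2" using \<Lambda>1 lnd by (simp add: l_def)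
  define u where "u = m powr (1/6)"
  define s where "s = RV powr (1/3)"
  have u1: "u \<ge> 1" using m by (simp add: u_def ge_one_powr_ge_zero)
  have s1: "s \<ge> 1" using RV by (simp add: s_def ge_one_powr_ge_zero)
  have mu: "m = u^6" using powr_root_pow[of m 6] m by (simp add: u_def)
  have RVs: "RV = s^3" using powr_root_pow[of RV 3] RV by (simp add: s_def)
  have m13: "m powr (1/3) = u^2"
  proof -
    have "m powr (1/3) = (m powr (1/6)) powr 2" using m by (simp add: powr_powr)
    also have "\<dots> = u^2" using m by (simp add: u_def powr_realpow)
    finally show ?thesis .
  qed
  have sm: "sqrt m = u^3"
  proof -
    have "sqrt m = m powr (1/2)" using m by (simp add: powr_half_sqrt)
    also have "\<dots> = (m powr (1/6)) powr 3" using m by (simp add: powr_powr)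
    also have "\<dots> = u^3" using m by (simp add: u_def powr_realpow)
    finally show ?thesis .
  qed
  have RV23: "RV powr (2/3) = s^2"
  proof -
    have "RV powr (2/3) = (RV powr (1/3)) powr 2" using RV by (simp add: powr_powr)
    also have "\<dots> = s^2" using RV by (simp add: s_def powr_realpow)
    finally show ?thesis .
  qed
  have RV43: "RV powr (4/3) = s^4"
  proof -
    have "RV powr (4/3) = (RV powr (1/3)) powr 4" using RV by (simp add: powr_powr)
    also have "\<dots> = s^4" using RV by (simp add: s_def powr_realpow)
    finally show ?thesis .
  qed
  have rr: "r = s^2 / u^2" using r m13 RV23 by simp
  have sdd: "sqrt dd * sqrt dd = dd" using dd by simp
  have K2: "K = sqrt dd * u^2" by (simp add: K m13)
  have e2: "\<epsilon> = sqrt dd / (2 * dd * u^6)" by (simp add: \<epsilon> mu)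
  have eK: "\<epsilon> * K = 1 / (2 * u^4)"
  proof -
    have "\<epsilon> * K = (sqrt dd * sqrt dd) * u^2 / (2 * dd * u^6)" by (simp add: K2 e2)
    also have "\<dots> = 1 / (2 * u^4)" using dd u1 by (simp add: sdd field_simps eval_nat_numeral)
    finally show ?thesis .
  qed
  have dK: "dd / K^2 = 1 / u^4"
  proof -
    have "K^2 = dd * u^4" using dd by (simp add: K2 power_mult_distrib power_mult[symmetric])
    thus ?thesis using dd by simp
  qed
  have t1: "m * (2 * (r + \<epsilon> * K) + dd / K^2) = 2 * s^2 * u^4 + 2 * u^2"
  proof -
    have "m * (2 * (r + \<epsilon> * K) + dd / K^2) = u^6 * (2 * (s^2 / u^2 + 1 / (2 * u^4)) + 1 / u^4)"
      unfolding eK dK rr mu by simp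
    also have "\<dots> = 2 * s^2 * u^4 + 2 * u^2" using u1 by (simp add: field_simps eval_nat_numeral)
    finally show ?thesis .
  qed
  have t2: "RV^2 / r^2 = s^2 * u^4"
  proof -
    have "RV^2 / r^2 = (s^3)^2 / (s^2 / u^2)^2" by (simp add: RVs rr)
    also have "\<dots> = s^2 * u^4" using s1 u1 by (simp add: power_divide field_simps eval_nat_numeral)
    finally show ?thesis .
  qed
  have t3: "sqrt (m * ln (1 / \<delta>) / 2) \<le> u^3 * l"
  proof -
    have "ln (1 / \<delta>) \<le> l^2" using \<Lambda>1 Ll by simp
    hence "m * ln (1 / \<delta>) / 2 \<le> u^6 * l^2" using mu lnd u1 by (simp add: mult_left_mono)
    hence "sqrt (m * ln (1 / \<delta>) / 2) \<le> sqrt ((u^3 * l)^2)"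
      by (simp add: power_mult_distrib power_mult[symmetric])
    thus ?thesis using u1 l1 by simp
  qed
  have "c \<le> 3 * s^2 * u^4 + 2 * u^2 + u^3 * l" using c t1 t2 t3 by simp
  also have "\<dots> \<le> 6 * s^2 * u^4 * l^2"
  proof -
    have s2: "s^2 \<ge> 1" using s1 by (simp add: one_le_power)
    have l2: "l^2 \<ge> 1" "l \<le> l^2" using l1 by (auto simp: one_le_power power2_eq_square intro: order.trans[OF l1] mult_left_le_one_le)
    have u2: "u^2 \<le> u^4" "u^3 \<le> u^4" using u1 by (auto intro: power_increasing)
    have a: "s^2 * u^4 \<le> s^2 * u^4 * l^2" using mult_left_mono[OF l2(1), of "s^2*u^4"] s2 u1 by simp
    have b: "u^2 \<le> s^2 * u^4 * l^2"
    proof -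
      have "u^2 \<le> 1 * u^4 * 1" using u2 by simp
      also have "\<dots> \<le> s^2 * u^4 * l^2" using s2 l2 u1 by (intro mult_mono) auto
      finally show ?thesis .
    qed
    have cc: "u^3 * l \<le> s^2 * u^4 * l^2"
    proof -
      have "u^3 * l \<le> u^4 * l^2" using u2 l2 u1 l1 by (intro mult_mono) auto
      also have "\<dots> = 1 * u^4 * l^2" by simp
      also have "\<dots> \<le> s^2 * u^4 * l^2" using s2 l2 u1 by (intro mult_right_mono) auto
      finally show ?thesis .
    qed
    show ?thesis using a b cc by simp
  qed
  finally have cb: "c \<le> (sqrt 6 * s * u^2 * l)^2"
    by (simp add: power_mult_distrib power_mult[symmetric] mult_ac)
  have sc: "sqrt c \<le> sqrt 6 * s * u^2 * l"
    using real_sqrt_le_mono[OF cb] s1 u1 l1 by simp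
  have "\<rho> / sqrt m * nx * sqrt c * (RV + RV) = (2 * \<rho> * nx * s^3 / u^3) * sqrt c"
    by (simp add: sm RVs)
  also have "\<dots> \<le> (2 * \<rho> * nx * s^3 / u^3) * (sqrt 6 * s * u^2 * l)"
    using sc \<rho> nx s1 u1 by (intro mult_left_mono) auto
  also have "\<dots> = nx * (2 * sqrt 6 * \<rho> * s^4 * l / u)"
    using u1 by (simp add: field_simps eval_nat_numeral)
  also have "\<dots> \<le> 1 * (25 * \<rho> * s^4 * l / u)"
  proof (rule mult_mono)
    have "sqrt 6 \<le> sqrt (25::real)" by (rule real_sqrt_le_mono) simp
    hence "2 * sqrt 6 \<le> (25::real)" by simp
    hence "(2 * sqrt 6) * (\<rho> * s^4 * l / u) \<le> 25 * (\<rho> * s^4 * l / u)"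
      using \<rho> s1 l1 u1 by (intro mult_right_mono) auto
    thus "2 * sqrt 6 * \<rho> * s^4 * l / u \<le> 25 * \<rho> * s^4 * l / u" by (simp add: mult_ac)
  qed (use nx \<rho> s1 l1 u1 in auto)
  also have "\<dots> = 25 * \<rho> * RV powr (4/3) * sqrt (ln (exp 1 * dd * m / \<delta>)) / m powr (1/6)"
    by (simp add: RV43 l_def u_def \<Lambda>_def)
  finally show ?thesis .
qed

lemma part1_NW:
  fixes x :: "real^'d::finite"
  assumes m0: "m > 0" and \<delta>: "0 < \<delta>" "\<delta> \<le> 1" and RV: "RV \<ge> 1" and RB: "RB \<ge> 0" and \<rho>: "\<rho> > 0"
  shows "\<exists>E\<in>sets (NW m :: (nat \<times> 'd \<Rightarrow> real) measure). measure (NW m) E \<ge> 1 - \<delta> \<and>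
    (\<forall>W0\<in>E. \<forall>a. (\<forall>j<m. a j \<in> {-1, 1}) \<longrightarrow> (\<forall>V B. frob_norm m (mat_diff V W0) \<le> RV \<longrightarrow> frob_norm m (mat_diff B W0) \<le> RB \<longrightarrow>
       \<bar>frob_inner m (mat_diff (grad_net \<rho> m a V x) (grad_net \<rho> m a W0 x)) B\<bar>
         \<le> 3 * \<rho> * norm x * (RB + 2 * RV) * RV powr (1/3) * ln (exp 1 / \<delta>) powr (1/4) / real m powr (1/6)))"
proof (cases "x = 0")
  case True
  interpret P: prob_space "NW m :: (nat \<times> 'd \<Rightarrow> real) measure" by (rule prob_space_NW)
  show ?thesis
  proof (intro bexI[of _ "space (NW m)"] conjI ballI allI impI)
    show "1 - \<delta> \<le> P.prob (space (NW m :: (nat \<times> 'd \<Rightarrow> real) measure))" using \<delta> by (simp add: P.prob_space)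
    fix W0 V B :: "nat \<times> 'd \<Rightarrow> real" and a :: "nat \<Rightarrow> real"
    assume a: "\<forall>j<m. a j \<in> {-1::real, 1}" and V: "frob_norm m (mat_diff V W0) \<le> RV" and B: "frob_norm m (mat_diff B W0) \<le> RB"
    have "\<bar>frob_inner m (mat_diff (grad_net \<rho> m a V x) (grad_net \<rho> m a W0 x)) B\<bar>
       \<le> \<rho> / sqrt (real m) * norm x * sqrt (real (card (flipset m V W0 x))) * (RV + RB)"
      by (rule core_det[OF _ _ V B]) (use a \<rho> in auto)
    thus "\<bar>frob_inner m (mat_diff (grad_net \<rho> m a V x) (grad_net \<rho> m a W0 x)) B\<bar>
         \<le> 3 * \<rho> * norm x * (RB + 2 * RV) * RV powr (1/3) * ln (exp 1 / \<delta>) powr (1/4) / real m powr (1/6)"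
      using True by simp
  qed simp
next
  case False
  define r where "r = RV powr (2/3) / real m powr (1/3)"
  have r0: "r > 0" using RV m0 by (simp add: r_def)
  define Q where "Q = {v :: real^'d. \<bar>inner v x\<bar> \<le> r * norm x}"
  have "closed Q" unfolding Q_def by (intro closed_Collect_le continuous_intros)
  hence Qb: "Q \<in> sets borel" by (rule borel_closed)
  have pQ: "measure (NW m :: (nat \<times> 'd \<Rightarrow> real) measure) {W \<in> space (NW m). rowv W j \<in> Q} \<le> r" if j: "j < m" for j
  proof -
    have "measure (NW m :: (nat \<times> 'd \<Rightarrow> real) measure) {W \<in> space (NW m). \<bar>inner (rowv W j) x\<bar> \<le> r * norm x} \<le> r * norm x / norm x"
      by (rule anticonc[OF j False]) (use r0 in simp)
    thus ?thesis using False by (simp add: Q_def)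
  qed
  obtain E where E: "E \<in> sets (NW m :: (nat \<times> 'd \<Rightarrow> real) measure)" "measure (NW m) E \<ge> 1 - \<delta>"
    and Ecount: "\<And>W. W \<in> E \<Longrightarrow> real (card {j. j < m \<and> rowv W j \<in> Q}) \<le> real m * r + sqrt (real m * ln (1 / \<delta>) / 2)"
    using count_hoeffding[OF m0 \<delta> Qb pQ] by blast
  show ?thesis
  proof (intro bexI[of _ E] conjI ballI allI impI)
    show "1 - \<delta> \<le> measure (NW m) E" by (rule E(2))
    show "E \<in> sets (NW m)" by (rule E(1))
    fix W0 V B :: "nat \<times> 'd \<Rightarrow> real" and a :: "nat \<Rightarrow> real"
    assume W0: "W0 \<in> E" and a: "\<forall>j<m. a j \<in> {-1::real, 1}" and V: "frob_norm m (mat_diff V W0) \<le> RV" and B: "frob_norm m (mat_diff B W0) \<le> RB"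
    have "{j. j < m \<and> \<bar>row_dot W0 j x\<bar> \<le> r * norm x} = {j. j < m \<and> rowv W0 j \<in> Q}"
      by (simp add: Q_def row_dot_inner)
    hence c: "real (card (flipset m V W0 x)) \<le> real m * r + sqrt (real m * ln (1 / \<delta>) / 2) + RV^2 / r^2"
      using flipset_card_bound[OF False r0 V] Ecount[OF W0] by simp
    have "\<bar>frob_inner m (mat_diff (grad_net \<rho> m a V x) (grad_net \<rho> m a W0 x)) B\<bar>
       \<le> \<rho> / sqrt (real m) * norm x * sqrt (real (card (flipset m V W0 x))) * (RV + RB)"
      by (rule core_det[OF _ _ V B]) (use a \<rho> in auto)
    also have "\<dots> \<le> 3 * \<rho> * norm x * (RB + 2 * RV) * RV powr (1/3) * ln (exp 1 / \<delta>) powr (1/4) / real m powr (1/6)"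
      by (rule arith1[OF _ RV RB \<rho> _ \<delta> _ r_def c]) (use m0 in auto)
    finally show "\<bar>frob_inner m (mat_diff (grad_net \<rho> m a V x) (grad_net \<rho> m a W0 x)) B\<bar>
         \<le> 3 * \<rho> * norm x * (RB + 2 * RV) * RV powr (1/3) * ln (exp 1 / \<delta>) powr (1/4) / real m powr (1/6)" .
  qed
qed

lemma ln_scale_le:
  fixes c u :: real
  assumes c: "c \<ge> 1" and u: "u \<ge> 0"
  shows "ln (1 + c * u) \<le> c * ln (1 + u)"
proof -
  have t: "0 \<le> 1 / c" "1 / c \<le> 1" using c by auto
  have "(1 - 1 / c) * ln 1 + (1 / c) * ln (1 + c * u) \<le> ln ((1 - 1 / c) *\<^sub>R 1 + (1 / c) *\<^sub>R (1 + c * u))"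
  proof (rule concave_onD[OF ln_concave t])
    have "c * u \<ge> 0" using c u by simp
    thus "1 + c * u \<in> {0<..}" by simp
  qed simp
  also have "(1 - 1 / c) *\<^sub>R 1 + (1 / c) *\<^sub>R (1 + c * u) = 1 + u"
    using c by (simp add: field_simps)
  finally have "ln (1 + c * u) / c \<le> ln (1 + u)" by simp
  thus ?thesis using c by (simp add: divide_le_eq mult.commute)
qed

lemma logistic_ratio:
  "logistic_loss s \<le> exp \<bar>s - t\<bar> * logistic_loss t"
proof -
  define c where "c = exp \<bar>s - t\<bar>"
  have c: "c \<ge> 1" by (simp add: c_def)
  have "exp (- s) = exp (t - s) * exp (- t)" by (simp flip: exp_add)
  also have "\<dots> \<le> c * exp (- t)" unfolding c_def by (intro mult_right_mono) auto
  finally have le: "1 + exp (- s) \<le> 1 + c * exp (- t)" by simp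
  have "c * exp (- t) > 0" using c by simp
  hence "ln (1 + exp (- s)) \<le> ln (1 + c * exp (- t))"
    using le by (subst ln_le_cancel_iff) (auto intro: add_pos_pos)
  also have "\<dots> \<le> c * ln (1 + exp (- t))" by (rule ln_scale_le[OF c]) simp
  finally show ?thesis by (simp add: logistic_loss_def c_def)
qed

lemma logistic_pos: "logistic_loss s > 0"
  unfolding logistic_loss_def by (intro ln_gt_zero) simp

lemma emp_risk_ratio:
  assumes ys: "\<forall>k<n. ys k \<in> {-1, 1::real}" and \<tau>: "\<tau> \<ge> 0"
    and b: "\<And>k. k < n \<Longrightarrow> \<bar>frob_inner m (grad_net \<rho> m a V1 (xs k)) B - frob_inner m (grad_net \<rho> m a V2 (xs k)) B\<bar> \<le> \<tau>"
  shows "emp_risk \<rho> m a n xs ys V1 B / emp_risk \<rho> m a n xs ys V2 B \<le> exp \<tau>"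
proof (cases "n = 0")
  case True thus ?thesis by (simp add: emp_risk_def)
next
  case False
  define f where "f V k = logistic_loss (ys k * frob_inner m (grad_net \<rho> m a V (xs k)) B)" for V k
  have le: "f V1 k \<le> exp \<tau> * f V2 k" if k: "k < n" for k
  proof -
    have "\<bar>ys k * frob_inner m (grad_net \<rho> m a V1 (xs k)) B - ys k * frob_inner m (grad_net \<rho> m a V2 (xs k)) B\<bar> \<le> \<tau>"
      using ys k b[OF k] by (auto simp: right_diff_distrib[symmetric] abs_mult)
    hence "exp \<bar>ys k * frob_inner m (grad_net \<rho> m a V1 (xs k)) B - ys k * frob_inner m (grad_net \<rho> m a V2 (xs k)) B\<bar> \<le> exp \<tau>"
      by simp
    thus ?thesis unfolding f_def
      by (rule order.trans[OF logistic_ratio mult_right_mono]) (simp add: logistic_loss_def)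
  qed
  have "(\<Sum>k<n. f V1 k) \<le> (\<Sum>k<n. exp \<tau> * f V2 k)" by (rule sum_mono) (use le in auto)
  hence s: "(\<Sum>k<n. f V1 k) \<le> exp \<tau> * (\<Sum>k<n. f V2 k)" by (simp add: sum_distrib_left)
  have pos: "(\<Sum>k<n. f V2 k) > 0"
    using False by (intro sum_pos) (auto simp: f_def logistic_pos)
  have "emp_risk \<rho> m a n xs ys V1 B / emp_risk \<rho> m a n xs ys V2 B = (\<Sum>k<n. f V1 k) / (\<Sum>k<n. f V2 k)"
    using False by (simp add: emp_risk_def f_def)
  also have "\<dots> \<le> exp \<tau>" using s pos by (simp add: divide_le_eq)
  finally show ?thesis .
qed

lemma part2_NW:
  fixes xs :: "nat \<Rightarrow> real^'d::finite"
  assumes m0: "m > 0" and \<delta>: "0 < \<delta>" "\<delta> \<le> 1" and RV: "RV \<ge> 1" and RB: "RB \<ge> 0" and \<rho>: "\<rho> > 0"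
    and dat: "\<forall>k<n. norm (xs k) \<le> 1 \<and> ys k \<in> {-1, 1}"
  defines "\<tau> \<equiv> 3 * \<rho> * (RB + 2 * RV) * RV powr (1/3) * ln (exp 1 / \<delta>) powr (1/4) / real m powr (1/6)"
  shows "\<exists>E\<in>sets (NW m :: (nat \<times> 'd \<Rightarrow> real) measure). measure (NW m) E \<ge> 1 - real n * \<delta> \<and>
    (\<forall>W0\<in>E. \<forall>a. (\<forall>j<m. a j \<in> {-1, 1}) \<longrightarrow> (\<forall>V1 V2 B. frob_norm m (mat_diff V1 W0) \<le> RV \<longrightarrow> frob_norm m (mat_diff V2 W0) \<le> RV
       \<longrightarrow> frob_norm m (mat_diff B W0) \<le> RB \<longrightarrow>
       emp_risk \<rho> m a n xs ys V1 B / emp_risk \<rho> m a n xs ys V2 B \<le> exp (2 * \<tau>)))"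
proof -
  let ?P = "\<lambda>k E. E \<in> sets (NW m :: (nat \<times> 'd \<Rightarrow> real) measure) \<and> measure (NW m) E \<ge> 1 - \<delta> \<and>
    (\<forall>W0\<in>E. \<forall>a. (\<forall>j<m. a j \<in> {-1, 1}) \<longrightarrow> (\<forall>V B. frob_norm m (mat_diff V W0) \<le> RV \<longrightarrow> frob_norm m (mat_diff B W0) \<le> RB \<longrightarrow>
       \<bar>frob_inner m (mat_diff (grad_net \<rho> m a V (xs k)) (grad_net \<rho> m a W0 (xs k))) B\<bar>
         \<le> 3 * \<rho> * norm (xs k) * (RB + 2 * RV) * RV powr (1/3) * ln (exp 1 / \<delta>) powr (1/4) / real m powr (1/6)))"
  have "\<forall>k\<in>{..<n}. \<exists>E. ?P k E"
    using part1_NW[OF m0 \<delta> RV RB \<rho>] by blast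
  then obtain Ef where Ef: "\<And>k. k \<in> {..<n} \<Longrightarrow> ?P k (Ef k)" by metis
  define E where "E = space (NW m :: (nat \<times> 'd \<Rightarrow> real) measure) \<inter> (\<Inter>k\<in>{..<n}. Ef k)"
  have EE: "E \<in> sets (NW m) \<and> measure (NW m) E \<ge> 1 - real (card {..<n}) * \<delta>"
    unfolding E_def by (rule inter_bound[OF prob_space_NW]) (use Ef in auto)
  have \<tau>0: "\<tau> \<ge> 0" unfolding \<tau>_def using \<rho> RB RV \<delta> by (intro divide_nonneg_nonneg mult_nonneg_nonneg) auto
  show ?thesis
  proof (intro bexI[of _ E] conjI ballI allI impI)
    show "E \<in> sets (NW m)" using EE by simp
    show "1 - real n * \<delta> \<le> measure (NW m) E" using EE by simp
    fix W0 V1 V2 B :: "nat \<times> 'd \<Rightarrow> real" and a :: "nat \<Rightarrow> real"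
    assume W0: "W0 \<in> E" and a: "\<forall>j<m. a j \<in> {-1::real, 1}" and V1: "frob_norm m (mat_diff V1 W0) \<le> RV"
      and V2: "frob_norm m (mat_diff V2 W0) \<le> RV" and B: "frob_norm m (mat_diff B W0) \<le> RB"
    have bnd: "\<bar>frob_inner m (mat_diff (grad_net \<rho> m a V (xs k)) (grad_net \<rho> m a W0 (xs k))) B\<bar> \<le> \<tau>"
      if k: "k < n" and V: "frob_norm m (mat_diff V W0) \<le> RV" for k V
    proof -
      have "W0 \<in> Ef k" using W0 k by (auto simp: E_def)
      hence h: "\<bar>frob_inner m (mat_diff (grad_net \<rho> m a V (xs k)) (grad_net \<rho> m a W0 (xs k))) B\<bar>
         \<le> 3 * \<rho> * norm (xs k) * (RB + 2 * RV) * RV powr (1/3) * ln (exp 1 / \<delta>) powr (1/4) / real m powr (1/6)"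
        using Ef[of k] k a V B by blast
      have "3 * \<rho> * norm (xs k) * (RB + 2 * RV) * RV powr (1/3) * ln (exp 1 / \<delta>) powr (1/4) / real m powr (1/6)
         = norm (xs k) * \<tau>" unfolding \<tau>_def by simp
      hence "\<bar>frob_inner m (mat_diff (grad_net \<rho> m a V (xs k)) (grad_net \<rho> m a W0 (xs k))) B\<bar> \<le> norm (xs k) * \<tau>"
        using h by simp
      also have "\<dots> \<le> 1 * \<tau>" using dat k \<tau>0 by (intro mult_right_mono) auto
      finally show ?thesis by simp
    qed
    show "emp_risk \<rho> m a n xs ys V1 B / emp_risk \<rho> m a n xs ys V2 B \<le> exp (2 * \<tau>)"
    proof (rule emp_risk_ratio)
      show "\<forall>k<n. ys k \<in> {-1, 1}" using dat by auto
      show "0 \<le> 2 * \<tau>" using \<tau>0 by simp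
      fix k assume k: "k < n"
      have "\<bar>frob_inner m (grad_net \<rho> m a V1 (xs k)) B - frob_inner m (grad_net \<rho> m a V2 (xs k)) B\<bar>
          = \<bar>frob_inner m (mat_diff (grad_net \<rho> m a V1 (xs k)) (grad_net \<rho> m a W0 (xs k))) B
             - frob_inner m (mat_diff (grad_net \<rho> m a V2 (xs k)) (grad_net \<rho> m a W0 (xs k))) B\<bar>"
        by (simp add: frob_inner_diff_left)
      also have "\<dots> \<le> \<tau> + \<tau>" using bnd[OF k V1] bnd[OF k V2] by linarith
      finally show "\<bar>frob_inner m (grad_net \<rho> m a V1 (xs k)) B - frob_inner m (grad_net \<rho> m a V2 (xs k)) B\<bar> \<le> 2 * \<tau>"
        by simp
    qed
  qed
qed

lemma pow3_le: "(3::nat)^d \<le> 3 * d^d"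
proof (cases "d \<ge> 3")
  case True
  hence "(3::nat)^d \<le> d^d" by (intro power_mono) auto
  thus ?thesis by simp
next
  case False
  hence "d = 0 \<or> d = 1 \<or> d = 2" by auto
  thus ?thesis by auto
qed

lemma grid_card:
  fixes d m :: nat
  shows "real ((2 * (d * m) + 1) ^ d) \<le> 1 + 3 * (real d ^ 2 * real m) ^ d"
proof (cases "d = 0 \<or> m = 0")
  case True thus ?thesis by (auto simp: power_0_left)
next
  case False
  hence dm: "d \<ge> 1" "m \<ge> 1" by auto
  have "(2 * (d * m) + 1) ^ d \<le> (3 * d * m) ^ d" using dm by (intro power_mono) auto
  also have "\<dots> = 3^d * d^d * m^d" by (simp add: power_mult_distrib)
  also have "\<dots> \<le> (3 * d^d) * d^d * m^d" by (intro mult_right_mono pow3_le) auto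
  also have "\<dots> = 3 * (d^2 * m)^d" by (simp add: power_mult_distrib power_mult[symmetric] power2_eq_square mult_ac)
  finally have "real ((2 * (d * m) + 1) ^ d) \<le> real (3 * (d^2 * m)^d)" by linarith
  thus ?thesis by simp
qed

lemma grid_exists:
  fixes d m :: nat
  assumes dd: "d = CARD('d::finite)" and m0: "m > 0"
  defines "G \<equiv> (\<lambda>f. \<chi> i. real_of_int (f i) / real (d * m)) ` (Pi\<^sub>E (UNIV::'d set) (\<lambda>_. {- int (d * m)..int (d * m)}))"
  shows "finite G" "real (card G) \<le> 1 + 3 * (real d ^ 2 * real m) ^ d"
    and "\<And>x::real^'d. norm x \<le> 1 \<Longrightarrow> \<exists>g\<in>G. norm (x - g) \<le> sqrt (real d) / (2 * real d * real m)"
proof -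
  let ?P = "Pi\<^sub>E (UNIV::'d set) (\<lambda>_. {- int (d * m)..int (d * m)})"
  have fP: "finite ?P" by (intro finite_PiE) auto
  thus "finite G" unfolding G_def by simp
  have "card G \<le> card ?P" unfolding G_def by (rule card_image_le[OF fP])
  also have "card ?P = (\<Prod>i\<in>(UNIV::'d set). card {- int (d * m)..int (d * m)})" by (rule card_PiE) simp
  also have "\<dots> = (2 * (d * m) + 1) ^ d" by (simp add: dd nat_add_distrib nat_mult_distrib mult.commute)
  finally have "real (card G) \<le> real ((2 * (d * m) + 1) ^ d)" by linarith
  thus "real (card G) \<le> 1 + 3 * (real d ^ 2 * real m) ^ d" using grid_card[of d m] by linarith
  fix x :: "real^'d" assume x: "norm x \<le> 1"
  have d0: "d > 0" using dd by simp
  define D where "D = real (d * m)"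
  have D0: "D > 0" using d0 m0 by (simp add: D_def)
  define f where "f i = round (x $ i * D)" for i
  have fb: "f i \<in> {- int (d * m)..int (d * m)}" for i
  proof -
    have "\<bar>x $ i\<bar> \<le> 1" using component_le_norm_cart[of x i] x by linarith
    hence a: "x $ i \<le> 1" "-1 \<le> x $ i" by auto
    have "x $ i * D \<le> 1 * D" using a D0 by (intro mult_right_mono) auto
    moreover have "(-1) * D \<le> x $ i * D" using a D0 by (intro mult_right_mono) auto
    ultimately have "x $ i * D \<le> real (d * m)" "- real (d * m) \<le> x $ i * D"
      by (auto simp: D_def)
    hence "f i \<le> round (real (d * m))" "round (- real (d * m)) \<le> f i"
      unfolding f_def by (auto intro: round_mono)
    moreover have "round (real (d * m)) = int (d * m)" using round_of_int[of "int (d * m)"] by simp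
    moreover have "round (- real (d * m)) = - int (d * m)" using round_of_int[of "- int (d * m)"] by simp
    ultimately show ?thesis by simp
  qed
  define g where "g = (\<chi> i. real_of_int (f i) / real (d * m))"
  have gG: "g \<in> G" unfolding G_def g_def using fb by (intro imageI) auto
  have comp: "\<bar>(x - g) $ i\<bar> \<le> 1 / (2 * D)" for i
  proof -
    have e: "(x - g) $ i = x $ i - of_int (round (x $ i * D)) / D" by (simp add: g_def f_def D_def)
    have "x $ i - of_int (round (x $ i * D)) / D = - (of_int (round (x $ i * D)) - x $ i * D) / D"
      using D0 by (simp add: field_simps)
    hence "\<bar>(x - g) $ i\<bar> = \<bar>of_int (round (x $ i * D)) - x $ i * D\<bar> / D" using D0 e by simp
    also have "\<dots> \<le> (1/2) / D" using D0 by (intro divide_right_mono of_int_round_abs_le) auto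
    finally show ?thesis by simp
  qed
  have "norm (x - g) = sqrt (\<Sum>i\<in>UNIV. ((x - g) $ i)^2)" by (simp add: norm_vec_def L2_set_def)
  also have "\<dots> \<le> sqrt (\<Sum>i\<in>(UNIV::'d set). (1 / (2 * D))^2)"
  proof (intro real_sqrt_le_mono sum_mono)
    fix i show "((x - g) $ i)^2 \<le> (1 / (2 * D))^2"
      by (metis abs_ge_zero power2_abs power_mono comp)
  qed
  also have "\<dots> = sqrt (real d * (1 / (2 * D))^2)" by (simp add: dd)
  also have "\<dots> = sqrt (real d) * (1 / (2 * D))" using D0 by (simp add: real_sqrt_mult)
  also have "\<dots> = sqrt (real d) / (2 * real d * real m)" by (simp add: D_def)
  finally show "\<exists>g\<in>G. norm (x - g) \<le> sqrt (real d) / (2 * real d * real m)" using gG by blast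
qed

lemma part3_NW:
  fixes m :: nat
  assumes m0: "m > 0" and \<delta>: "0 < \<delta>" "\<delta> \<le> 1" and RV: "RV \<ge> 1" and \<rho>: "\<rho> > 0"
  defines "\<tau>3 \<equiv> 25 * \<rho> * RV powr (4/3) * sqrt (ln (exp 1 * real CARD('d::finite) * real m / \<delta>)) / real m powr (1/6)"
  shows "\<exists>E\<in>sets (NW m :: (nat \<times> 'd \<Rightarrow> real) measure).
     measure (NW m) E \<ge> 1 - (1 + 3 * (real CARD('d) ^ 2 * real m) ^ CARD('d)) * \<delta> \<and>
    (\<forall>W0\<in>E. \<forall>a. (\<forall>j<m. a j \<in> {-1, 1}) \<longrightarrow> (\<forall>V (x :: real^'d). frob_norm m (mat_diff V W0) \<le> RV \<longrightarrow> norm x \<le> 1 \<longrightarrow>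
       \<bar>frob_inner m (mat_diff (grad_net \<rho> m a V x) (grad_net \<rho> m a W0 x)) V\<bar> \<le> \<tau>3))"
proof -
  interpret P: prob_space "NW m :: (nat \<times> 'd \<Rightarrow> real) measure" by (rule prob_space_NW)
  define d where "d = CARD('d)"
  have d1: "d \<ge> 1" by (simp add: d_def Suc_le_eq)
  define G where "G = (\<lambda>f. \<chi> i. real_of_int (f i) / real (d * m)) ` (Pi\<^sub>E (UNIV::'d set) (\<lambda>_. {- int (d * m)..int (d * m)}))"
  have Gfin: "finite G" and Gcard: "real (card G) \<le> 1 + 3 * (real d ^ 2 * real m) ^ d"
    and Gnet: "\<And>x::real^'d. norm x \<le> 1 \<Longrightarrow> \<exists>g\<in>G. norm (x - g) \<le> sqrt (real d) / (2 * real d * real m)"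
    using grid_exists[OF d_def m0] unfolding G_def by auto
  define r where "r = RV powr (2/3) / real m powr (1/3)"
  define K where "K = sqrt (real d) * real m powr (1/3)"
  define \<epsilon> where "\<epsilon> = sqrt (real d) / (2 * real d * real m)"
  have r0: "r > 0" using RV m0 by (simp add: r_def)
  have K0: "K > 0" using d1 m0 by (simp add: K_def)
  have e0: "\<epsilon> \<ge> 0" by (simp add: \<epsilon>_def)
  have ehalf: "\<epsilon> \<le> 1/2"
  proof -
    have "real d \<le> real d * real d" using d1 by (simp add: mult_le_cancel_left1)
    hence "sqrt (real d) \<le> sqrt (real d * real d)" by (rule real_sqrt_le_mono)
    hence "sqrt (real d) \<le> real d" by simp
    also have "\<dots> \<le> real d * real m" using m0 d1 by simp
    finally show ?thesis using d1 m0 by (simp add: \<epsilon>_def field_simps)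
  qed
  define Q where "Q g = {v :: real^'d. \<bar>inner v g\<bar> \<le> r + \<epsilon> * norm v}" for g :: "real^'d"
  define pg where "pg = 2 * (r + \<epsilon> * K) + real d / K^2"
  define bound where "bound = real m * pg + sqrt (real m * ln (1 / \<delta>) / 2)"
  have Qb: "Q g \<in> sets borel" for g
  proof -
    have "closed (Q g)" unfolding Q_def by (intro closed_Collect_le continuous_intros)
    thus ?thesis by (rule borel_closed)
  qed
  have pQ: "measure (NW m :: (nat \<times> 'd \<Rightarrow> real) measure) {W \<in> space (NW m). rowv W j \<in> Q g} \<le> pg"
    if j: "j < m" and g: "norm g \<ge> 1/2" for j g
  proof -
    have g0: "g \<noteq> 0" using g by auto
    let ?A = "{W \<in> space (NW m :: (nat \<times> 'd \<Rightarrow> real) measure). \<bar>inner (rowv W j) g\<bar> \<le> r + \<epsilon> * K}"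
    let ?B = "{W \<in> space (NW m :: (nat \<times> 'd \<Rightarrow> real) measure). norm (rowv W j) > K}"
    have "{W \<in> space (NW m). rowv W j \<in> Q g} \<subseteq> ?A \<union> ?B"
    proof safe
      fix W :: "nat \<times> 'd \<Rightarrow> real" assume W: "W \<in> space (NW m)" "rowv W j \<in> Q g" "\<not> K < norm (rowv W j)"
      have "\<bar>inner (rowv W j) g\<bar> \<le> r + \<epsilon> * norm (rowv W j)" using W by (simp add: Q_def)
      also have "\<dots> \<le> r + \<epsilon> * K" using W e0 by (intro add_left_mono mult_left_mono) auto
      finally show "\<bar>inner (rowv W j) g\<bar> \<le> r + \<epsilon> * K" .
    qed
    hence "P.prob {W \<in> space (NW m). rowv W j \<in> Q g} \<le> P.prob (?A \<union> ?B)"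
      using j by (intro P.finite_measure_mono) auto
    also have "\<dots> \<le> P.prob ?A + P.prob ?B"
      using j by (intro measure_Un_le) auto
    also have "\<dots> \<le> (r + \<epsilon> * K) / norm g + real d / K^2"
      using anticonc[OF j g0, of "r + \<epsilon> * K"] rownorm_tail[OF j K0] r0 e0 K0 unfolding d_def
      by (intro add_mono) auto
    also have "(r + \<epsilon> * K) / norm g \<le> 2 * (r + \<epsilon> * K)"
    proof -
      have "(r + \<epsilon> * K) / norm g \<le> (r + \<epsilon> * K) / (1/2)"
        using g r0 e0 K0 by (intro divide_left_mono) auto
      thus ?thesis by simp
    qed
    finally show ?thesis by (simp add: pg_def)
  qed
  let ?P = "\<lambda>g E. E \<in> sets (NW m :: (nat \<times> 'd \<Rightarrow> real) measure) \<and> measure (NW m) E \<ge> 1 - \<delta> \<and>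
     (norm g \<ge> 1/2 \<longrightarrow> (\<forall>W\<in>E. real (card {j. j < m \<and> rowv W j \<in> Q g}) \<le> bound))"
  have "\<forall>g\<in>G. \<exists>E. ?P g E"
  proof
    fix g assume "g \<in> G"
    show "\<exists>E. ?P g E"
    proof (cases "norm g \<ge> 1/2")
      case True
      show ?thesis using count_hoeffding[OF m0 \<delta> Qb pQ[OF _ True]] True unfolding bound_def by blast
    next
      case False
      show ?thesis using \<delta> False by (intro exI[of _ "space (NW m)"]) (simp add: P.prob_space)
    qed
  qed
  from bchoice[OF this] obtain Ef where Ef0: "\<forall>g\<in>G. ?P g (Ef g)" ..
  have Ef: "?P g (Ef g)" if "g \<in> G" for g by (rule bspec[OF Ef0 that])
  define E where "E = space (NW m :: (nat \<times> 'd \<Rightarrow> real) measure) \<inter> (\<Inter>g\<in>G. Ef g)"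
  have EE: "E \<in> sets (NW m) \<and> measure (NW m) E \<ge> 1 - real (card G) * \<delta>"
    unfolding E_def by (rule inter_bound[OF prob_space_NW Gfin]) (use Ef in auto)
  have ge1: "exp 1 * real CARD('d) * real m / \<delta> \<ge> 1"
  proof -
    have a: "(1::real) \<le> exp 1" by simp
    have b1: "real CARD('d) \<ge> 1" "real m \<ge> 1" using d1 m0 unfolding d_def by auto
    have b: "(1::real) \<le> real CARD('d) * real m" using mult_mono[OF b1(1) b1(2)] by simp
    have "1 \<le> exp 1 * (real CARD('d) * real m)" using mult_mono[OF a b] by simp
    also have "\<dots> \<le> exp 1 * (real CARD('d) * real m) / \<delta>"
    proof -
      have x0: "0 \<le> exp 1 * (real CARD('d) * real m)" by simp
      have "exp 1 * (real CARD('d) * real m) * \<delta> \<le> exp 1 * (real CARD('d) * real m) * 1"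
        by (rule mult_left_mono) (use \<delta> x0 in auto)
      thus ?thesis using \<delta> by (simp add: le_divide_eq)
    qed
    finally show ?thesis by (simp add: mult_ac)
  qed
  have \<tau>0: "\<tau>3 \<ge> 0" unfolding \<tau>3_def using \<rho> ge1 by (intro divide_nonneg_nonneg mult_nonneg_nonneg) auto
  show ?thesis
  proof (intro bexI[of _ E] conjI ballI allI impI)
    show "E \<in> sets (NW m)" using EE by simp
    have "real (card G) * \<delta> \<le> (1 + 3 * (real CARD('d) ^ 2 * real m) ^ CARD('d)) * \<delta>"
      using Gcard \<delta> unfolding d_def by (intro mult_right_mono) auto
    thus "1 - (1 + 3 * (real CARD('d) ^ 2 * real m) ^ CARD('d)) * \<delta> \<le> measure (NW m) E" using EE by simp
    fix W0 V :: "nat \<times> 'd \<Rightarrow> real" and a :: "nat \<Rightarrow> real" and x :: "real^'d"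
    assume W0: "W0 \<in> E" and a: "\<forall>j<m. a j \<in> {-1::real, 1}" and V: "frob_norm m (mat_diff V W0) \<le> RV"
      and x: "norm x \<le> 1"
    have cd: "\<bar>frob_inner m (mat_diff (grad_net \<rho> m a V x) (grad_net \<rho> m a W0 x)) V\<bar>
       \<le> \<rho> / sqrt (real m) * norm x * sqrt (real (card (flipset m V W0 x))) * (RV + RV)"
      by (rule core_det[OF _ _ V V]) (use a \<rho> in auto)
    show "\<bar>frob_inner m (mat_diff (grad_net \<rho> m a V x) (grad_net \<rho> m a W0 x)) V\<bar> \<le> \<tau>3"
    proof (cases "x = 0")
      case True thus ?thesis using cd \<tau>0 by simp
    next
      case False
      define xh where "xh = (1 / norm x) *\<^sub>R x"
      have nxh: "norm xh = 1" using False by (simp add: xh_def)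
      obtain g where gG: "g \<in> G" and gx: "norm (xh - g) \<le> \<epsilon>"
        using Gnet[of xh] nxh unfolding \<epsilon>_def by auto
      have ng: "norm g \<ge> 1/2"
      proof -
        have "norm xh \<le> norm g + norm (xh - g)" by (rule norm_triangle_sub)
        thus ?thesis using nxh gx ehalf by simp
      qed
      have sub: "{j. j < m \<and> \<bar>row_dot W0 j x\<bar> \<le> r * norm x} \<subseteq> {j. j < m \<and> rowv W0 j \<in> Q g}"
      proof safe
        fix j assume j: "j < m" and h: "\<bar>row_dot W0 j x\<bar> \<le> r * norm x"
        let ?w = "rowv W0 j"
        have "inner ?w xh = inner ?w x / norm x" by (simp add: xh_def)
        hence "\<bar>inner ?w xh\<bar> \<le> r" using h False by (simp add: row_dot_inner divide_le_eq abs_divide)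
        moreover have "\<bar>inner ?w (g - xh)\<bar> \<le> norm ?w * \<epsilon>"
        proof -
          have "\<bar>inner ?w (g - xh)\<bar> \<le> norm ?w * norm (g - xh)" by (rule Cauchy_Schwarz_ineq2)
          also have "\<dots> \<le> norm ?w * \<epsilon>" using gx by (intro mult_left_mono) (auto simp: norm_minus_commute)
          finally show ?thesis .
        qed
        moreover have "inner ?w g = inner ?w xh + inner ?w (g - xh)" by (simp add: inner_diff_right)
        ultimately have "\<bar>inner ?w g\<bar> \<le> r + \<epsilon> * norm ?w" by (simp add: mult.commute)
        thus "rowv W0 j \<in> Q g" by (simp add: Q_def)
      qed
      have "W0 \<in> Ef g" using W0 gG by (auto simp: E_def)
      hence cQ: "real (card {j. j < m \<and> rowv W0 j \<in> Q g}) \<le> bound" using Ef[OF gG] ng by blast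
      have "card {j. j < m \<and> \<bar>row_dot W0 j x\<bar> \<le> r * norm x} \<le> card {j. j < m \<and> rowv W0 j \<in> Q g}"
        by (rule card_mono[OF _ sub]) simp
      hence c: "real (card (flipset m V W0 x)) \<le> real m * pg + sqrt (real m * ln (1 / \<delta>) / 2) + RV^2 / r^2"
        using flipset_card_bound[OF False r0 V] cQ unfolding bound_def by linarith
      have "\<rho> / sqrt (real m) * norm x * sqrt (real (card (flipset m V W0 x))) * (RV + RV) \<le> \<tau>3"
        unfolding \<tau>3_def
        by (rule arith3[OF _ RV \<rho> _ x \<delta> _ _ r_def K_def \<epsilon>_def c[unfolded pg_def], unfolded d_def])
           (use m0 d1 in \<open>auto simp: d_def\<close>)
      thus ?thesis using cd by linarith
    qed
  qed
qed

lemma relu_eq_frob: "relu_net \<rho> m a V x = frob_inner m (grad_net \<rho> m a V x) V"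
  unfolding frob_inner_grad relu_net_def
  by (intro arg_cong[where f="\<lambda>t. \<rho> / sqrt (real m) * t"] sum.cong refl) (auto simp: max_def)

lemma risk_ratio:
  assumes AE: "AE z in \<mu>. norm (fst z) \<le> 1 \<and> snd z \<in> {-1, 1}"
    and b: "\<And>x. norm x \<le> 1 \<Longrightarrow> \<bar>frob_inner m (mat_diff (grad_net \<rho> m a V x) (grad_net \<rho> m a W0 x)) V\<bar> \<le> \<tau>"
  shows "pop_risk \<rho> m a \<mu> V / pop_risk0 \<rho> m a W0 \<mu> V \<le> exp \<tau>"
proof -
  define f where "f z = logistic_loss (snd z * relu_net \<rho> m a V (fst z))" for z :: "(real^'a) \<times> real"
  define g where "g z = logistic_loss (snd z * frob_inner m (grad_net \<rho> m a W0 (fst z)) V)" for z :: "(real^'a) \<times> real"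
  have fg: "AE z in \<mu>. f z \<le> exp \<tau> * g z"
    using AE
  proof (rule AE_mp, intro AE_I2 impI)
    fix z :: "(real^'a) \<times> real" assume z: "norm (fst z) \<le> 1 \<and> snd z \<in> {-1, 1}"
    have "\<bar>snd z * relu_net \<rho> m a V (fst z) - snd z * frob_inner m (grad_net \<rho> m a W0 (fst z)) V\<bar>
        = \<bar>frob_inner m (mat_diff (grad_net \<rho> m a V (fst z)) (grad_net \<rho> m a W0 (fst z))) V\<bar>"
      using z by (auto simp: relu_eq_frob frob_inner_diff_left right_diff_distrib[symmetric] abs_mult)
    also have "\<dots> \<le> \<tau>" using b z by auto
    finally have "exp \<bar>snd z * relu_net \<rho> m a V (fst z) - snd z * frob_inner m (grad_net \<rho> m a W0 (fst z)) V\<bar> \<le> exp \<tau>"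
      by simp
    thus "f z \<le> exp \<tau> * g z" unfolding f_def g_def
      by (rule order.trans[OF logistic_ratio mult_right_mono]) (simp add: logistic_loss_def)
  qed
  have g0: "integral\<^sup>L \<mu> g \<ge> 0"
    by (rule integral_nonneg_AE) (simp add: g_def logistic_loss_def)
  have pr: "pop_risk \<rho> m a \<mu> V = integral\<^sup>L \<mu> f" by (simp add: pop_risk_def f_def[abs_def])
  have pr0: "pop_risk0 \<rho> m a W0 \<mu> V = integral\<^sup>L \<mu> g" by (simp add: pop_risk0_def g_def[abs_def])
  show ?thesis
  proof (cases "integrable \<mu> f \<and> integrable \<mu> g \<and> integral\<^sup>L \<mu> g \<noteq> 0")
    case True
    hence gp: "integral\<^sup>L \<mu> g > 0" using g0 by simp
    have "integral\<^sup>L \<mu> f \<le> integral\<^sup>L \<mu> (\<lambda>z. exp \<tau> * g z)"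
      by (rule integral_mono_AE) (use True fg in auto)
    also have "\<dots> = exp \<tau> * integral\<^sup>L \<mu> g" by simp
    finally show ?thesis using gp by (simp add: pr pr0 divide_le_eq)
  next
    case False
    hence "integral\<^sup>L \<mu> f = 0 \<or> integral\<^sup>L \<mu> g = 0" using not_integrable_integral_eq by blast
    thus ?thesis by (auto simp: pr pr0)
  qed
qed

theorem lemmaA7:
  fixes \<delta> \<rho> R_V R_B :: real and m :: nat
    and \<mu> :: "((real^'d::finite) \<times> real) measure"
  assumes "0 < \<delta>" "\<delta> < 1" "R_V \<ge> 1" "R_B \<ge> 0" "\<rho> > 0" "m > 0"
    and "prob_space \<mu>" "sets \<mu> = sets borel"
    and "AE z in \<mu>. norm (fst z) \<le> 1 \<and> snd z \<in> {-1, 1}"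
  shows
   \<comment> \<open>(1)\<close>
   "(\<forall>x :: real^'d. whp (init_measure m :: ((nat \<Rightarrow> real) \<times> (nat \<times> 'd \<Rightarrow> real)) measure) (1 - 3 * \<delta>)
       (\<lambda>(a, W0). \<forall>V B. frob_norm m (mat_diff V W0) \<le> R_V \<longrightarrow> frob_norm m (mat_diff B W0) \<le> R_B \<longrightarrow>
          \<bar>frob_inner m (mat_diff (grad_net \<rho> m a V x) (grad_net \<rho> m a W0 x)) B\<bar>
            \<le> 3 * \<rho> * norm x * (R_B + 2 * R_V) * R_V powr (1/3) * ln (exp 1 / \<delta>) powr (1/4)
                / real m powr (1/6)))
   \<and>
   \<comment> \<open>(2)\<close>
   (\<forall>(n::nat) (xs :: nat \<Rightarrow> real^'d) (ys :: nat \<Rightarrow> real).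
      (\<forall>k<n. norm (xs k) \<le> 1 \<and> ys k \<in> {-1, 1}) \<longrightarrow>
      (let \<tau>\<^sub>1 = 3 * \<rho> * (R_B + 2 * R_V) * R_V powr (1/3) * ln (exp 1 / \<delta>) powr (1/4) / real m powr (1/6)
       in whp (init_measure m :: ((nat \<Rightarrow> real) \<times> (nat \<times> 'd \<Rightarrow> real)) measure) (1 - 3 * real n * \<delta>)
         (\<lambda>(a, W0). \<forall>V1 V2 B. frob_norm m (mat_diff V1 W0) \<le> R_V \<longrightarrow> frob_norm m (mat_diff V2 W0) \<le> R_V
            \<longrightarrow> frob_norm m (mat_diff B W0) \<le> R_B \<longrightarrow>
            emp_risk \<rho> m a n xs ys V1 B / emp_risk \<rho> m a n xs ys V2 B \<le> exp (2 * \<tau>\<^sub>1))))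
   \<and>
   \<comment> \<open>(3) and (4)\<close>
   (real m \<ge> ln (exp 1 * real CARD('d) * real m) \<longrightarrow>
     (let \<tau>\<^sub>3 = 25 * \<rho> * R_V powr (4/3) * sqrt (ln (exp 1 * real CARD('d) * real m / \<delta>)) / real m powr (1/6);
          p = 1 - (1 + 3 * (real CARD('d) ^ 2 * real m) ^ CARD('d)) * \<delta>
      in whp (init_measure m :: ((nat \<Rightarrow> real) \<times> (nat \<times> 'd \<Rightarrow> real)) measure) p
           (\<lambda>(a, W0). \<forall>V (x :: real^'d). frob_norm m (mat_diff V W0) \<le> R_V \<longrightarrow> norm x \<le> 1 \<longrightarrow>
              \<bar>frob_inner m (mat_diff (grad_net \<rho> m a V x) (grad_net \<rho> m a W0 x)) V\<bar> \<le> \<tau>\<^sub>3)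
       \<and> whp (init_measure m :: ((nat \<Rightarrow> real) \<times> (nat \<times> 'd \<Rightarrow> real)) measure) p
           (\<lambda>(a, W0). \<forall>V. frob_norm m (mat_diff V W0) \<le> R_V \<longrightarrow>
              pop_risk \<rho> m a \<mu> V / pop_risk0 \<rho> m a W0 \<mu> V \<le> exp \<tau>\<^sub>3)))"
proof (intro conjI allI impI)
  have \<delta>: "0 < \<delta>" "\<delta> \<le> 1" using assms by auto
  note m0 = \<open>m > 0\<close> and RV = \<open>R_V \<ge> 1\<close> and RB = \<open>R_B \<ge> 0\<close> and \<rho> = \<open>\<rho> > 0\<close>
  fix x :: "real^'d"
  obtain E where E: "E \<in> sets (NW m :: (nat \<times> 'd \<Rightarrow> real) measure)" "measure (NW m) E \<ge> 1 - \<delta>"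
    and Eb: "\<forall>W0\<in>E. \<forall>a. (\<forall>j<m. a j \<in> {-1, 1}) \<longrightarrow> (\<forall>V B. frob_norm m (mat_diff V W0) \<le> R_V \<longrightarrow> frob_norm m (mat_diff B W0) \<le> R_B \<longrightarrow>
       \<bar>frob_inner m (mat_diff (grad_net \<rho> m a V x) (grad_net \<rho> m a W0 x)) B\<bar>
         \<le> 3 * \<rho> * norm x * (R_B + 2 * R_V) * R_V powr (1/3) * ln (exp 1 / \<delta>) powr (1/4) / real m powr (1/6))"
    using part1_NW[OF m0 \<delta> RV RB \<rho>, of x] by blast
  obtain F where F: "F \<in> sets (init_measure m :: ((nat \<Rightarrow> real) \<times> (nat \<times> 'd \<Rightarrow> real)) measure)"
    "measure (init_measure m :: ((nat \<Rightarrow> real) \<times> (nat \<times> 'd \<Rightarrow> real)) measure) F \<ge> 1 - \<delta>"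
    and FE: "\<forall>(a, W)\<in>F. (\<forall>j<m. a j \<in> {-1, 1}) \<and> W \<in> E"
    using lift_event[OF E] by blast
  show "whp (init_measure m :: ((nat \<Rightarrow> real) \<times> (nat \<times> 'd \<Rightarrow> real)) measure) (1 - 3 * \<delta>)
       (\<lambda>(a, W0). \<forall>V B. frob_norm m (mat_diff V W0) \<le> R_V \<longrightarrow> frob_norm m (mat_diff B W0) \<le> R_B \<longrightarrow>
          \<bar>frob_inner m (mat_diff (grad_net \<rho> m a V x) (grad_net \<rho> m a W0 x)) B\<bar>
            \<le> 3 * \<rho> * norm x * (R_B + 2 * R_V) * R_V powr (1/3) * ln (exp 1 / \<delta>) powr (1/4)
                / real m powr (1/6))"
    unfolding whp_def
  proof (intro bexI[OF _ F(1)] conjI ballI)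
    show "1 - 3 * \<delta> \<le> measure (init_measure m) F" using F(2) \<delta> by simp
    fix \<omega> assume "\<omega> \<in> F"
    then obtain a W0 where \<omega>: "\<omega> = (a, W0)" and a: "\<forall>j<m. a j \<in> {-1, 1}" and W0: "W0 \<in> E"
      using FE by (cases \<omega>) auto
    show "case \<omega> of (a, W0) \<Rightarrow> \<forall>V B. frob_norm m (mat_diff V W0) \<le> R_V \<longrightarrow> frob_norm m (mat_diff B W0) \<le> R_B \<longrightarrow>
          \<bar>frob_inner m (mat_diff (grad_net \<rho> m a V x) (grad_net \<rho> m a W0 x)) B\<bar>
            \<le> 3 * \<rho> * norm x * (R_B + 2 * R_V) * R_V powr (1/3) * ln (exp 1 / \<delta>) powr (1/4)
                / real m powr (1/6)"
      using Eb W0 a unfolding \<omega> by blast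
  qed
next
  have \<delta>: "0 < \<delta>" "\<delta> \<le> 1" using assms by auto
  note m0 = \<open>m > 0\<close> and RV = \<open>R_V \<ge> 1\<close> and RB = \<open>R_B \<ge> 0\<close> and \<rho> = \<open>\<rho> > 0\<close>
  fix n :: nat and xs :: "nat \<Rightarrow> real^'d" and ys :: "nat \<Rightarrow> real"
  assume dat: "\<forall>k<n. norm (xs k) \<le> 1 \<and> ys k \<in> {-1, 1}"
  define \<tau> where "\<tau> = 3 * \<rho> * (R_B + 2 * R_V) * R_V powr (1/3) * ln (exp 1 / \<delta>) powr (1/4) / real m powr (1/6)"
  obtain E where E: "E \<in> sets (NW m :: (nat \<times> 'd \<Rightarrow> real) measure)" "measure (NW m) E \<ge> 1 - real n * \<delta>"
    and Eb: "\<forall>W0\<in>E. \<forall>a. (\<forall>j<m. a j \<in> {-1, 1}) \<longrightarrow> (\<forall>V1 V2 B. frob_norm m (mat_diff V1 W0) \<le> R_V \<longrightarrow> frob_norm m (mat_diff V2 W0) \<le> R_V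
       \<longrightarrow> frob_norm m (mat_diff B W0) \<le> R_B \<longrightarrow>
       emp_risk \<rho> m a n xs ys V1 B / emp_risk \<rho> m a n xs ys V2 B \<le> exp (2 * \<tau>))"
    using part2_NW[OF m0 \<delta> RV RB \<rho> dat] unfolding \<tau>_def by blast
  obtain F where F: "F \<in> sets (init_measure m :: ((nat \<Rightarrow> real) \<times> (nat \<times> 'd \<Rightarrow> real)) measure)"
    "measure (init_measure m :: ((nat \<Rightarrow> real) \<times> (nat \<times> 'd \<Rightarrow> real)) measure) F \<ge> 1 - real n * \<delta>"
    and FE: "\<forall>(a, W)\<in>F. (\<forall>j<m. a j \<in> {-1, 1}) \<and> W \<in> E"
    using lift_event[OF E] by blast
  show "let \<tau>\<^sub>1 = 3 * \<rho> * (R_B + 2 * R_V) * R_V powr (1/3) * ln (exp 1 / \<delta>) powr (1/4) / real m powr (1/6)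
       in whp (init_measure m :: ((nat \<Rightarrow> real) \<times> (nat \<times> 'd \<Rightarrow> real)) measure) (1 - 3 * real n * \<delta>)
         (\<lambda>(a, W0). \<forall>V1 V2 B. frob_norm m (mat_diff V1 W0) \<le> R_V \<longrightarrow> frob_norm m (mat_diff V2 W0) \<le> R_V
            \<longrightarrow> frob_norm m (mat_diff B W0) \<le> R_B \<longrightarrow>
            emp_risk \<rho> m a n xs ys V1 B / emp_risk \<rho> m a n xs ys V2 B \<le> exp (2 * \<tau>\<^sub>1))"
    unfolding Let_def \<tau>_def[symmetric] whp_def
  proof (intro bexI[OF _ F(1)] conjI ballI)
    have "0 \<le> real n * \<delta>" using \<delta> by simp
    thus "1 - 3 * real n * \<delta> \<le> measure (init_measure m) F" using F(2) by linarith
    fix \<omega> assume "\<omega> \<in> F"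
    then obtain a W0 where \<omega>: "\<omega> = (a, W0)" and a: "\<forall>j<m. a j \<in> {-1, 1}" and W0: "W0 \<in> E"
      using FE by (cases \<omega>) auto
    show "case \<omega> of (a, W0) \<Rightarrow> \<forall>V1 V2 B. frob_norm m (mat_diff V1 W0) \<le> R_V \<longrightarrow> frob_norm m (mat_diff V2 W0) \<le> R_V
            \<longrightarrow> frob_norm m (mat_diff B W0) \<le> R_B \<longrightarrow>
            emp_risk \<rho> m a n xs ys V1 B / emp_risk \<rho> m a n xs ys V2 B \<le> exp (2 * \<tau>)"
      using Eb W0 a unfolding \<omega> by blast
  qed
next
  have \<delta>: "0 < \<delta>" "\<delta> \<le> 1" using assms by auto
  note m0 = \<open>m > 0\<close> and RV = \<open>R_V \<ge> 1\<close> and \<rho> = \<open>\<rho> > 0\<close>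
  define \<tau> where "\<tau> = 25 * \<rho> * R_V powr (4/3) * sqrt (ln (exp 1 * real CARD('d) * real m / \<delta>)) / real m powr (1/6)"
  define p where "p = 1 - (1 + 3 * (real CARD('d) ^ 2 * real m) ^ CARD('d)) * \<delta>"
  obtain E where E: "E \<in> sets (NW m :: (nat \<times> 'd \<Rightarrow> real) measure)" "measure (NW m) E \<ge> p"
    and Eb: "\<forall>W0\<in>E. \<forall>a. (\<forall>j<m. a j \<in> {-1, 1}) \<longrightarrow> (\<forall>V (x :: real^'d). frob_norm m (mat_diff V W0) \<le> R_V \<longrightarrow> norm x \<le> 1 \<longrightarrow>
       \<bar>frob_inner m (mat_diff (grad_net \<rho> m a V x) (grad_net \<rho> m a W0 x)) V\<bar> \<le> \<tau>)"
    using part3_NW[OF m0 \<delta> RV \<rho>] unfolding \<tau>_def p_def by blast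
  obtain F where F: "F \<in> sets (init_measure m :: ((nat \<Rightarrow> real) \<times> (nat \<times> 'd \<Rightarrow> real)) measure)"
    "measure (init_measure m :: ((nat \<Rightarrow> real) \<times> (nat \<times> 'd \<Rightarrow> real)) measure) F \<ge> p"
    and FE: "\<forall>(a, W)\<in>F. (\<forall>j<m. a j \<in> {-1, 1}) \<and> W \<in> E"
    using lift_event[OF E] by blast
  have w3: "whp (init_measure m :: ((nat \<Rightarrow> real) \<times> (nat \<times> 'd \<Rightarrow> real)) measure) p
           (\<lambda>(a, W0). \<forall>V (x :: real^'d). frob_norm m (mat_diff V W0) \<le> R_V \<longrightarrow> norm x \<le> 1 \<longrightarrow>
              \<bar>frob_inner m (mat_diff (grad_net \<rho> m a V x) (grad_net \<rho> m a W0 x)) V\<bar> \<le> \<tau>)"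
    unfolding whp_def
  proof (intro bexI[OF _ F(1)] conjI ballI)
    show "p \<le> measure (init_measure m) F" using F(2) by simp
    fix \<omega> assume "\<omega> \<in> F"
    then obtain a W0 where \<omega>: "\<omega> = (a, W0)" and a: "\<forall>j<m. a j \<in> {-1, 1}" and W0: "W0 \<in> E"
      using FE by (cases \<omega>) auto
    show "case \<omega> of (a, W0) \<Rightarrow> \<forall>V (x :: real^'d). frob_norm m (mat_diff V W0) \<le> R_V \<longrightarrow> norm x \<le> 1 \<longrightarrow>
              \<bar>frob_inner m (mat_diff (grad_net \<rho> m a V x) (grad_net \<rho> m a W0 x)) V\<bar> \<le> \<tau>"
      using Eb W0 a unfolding \<omega> by blast
  qed
  have w4: "whp (init_measure m :: ((nat \<Rightarrow> real) \<times> (nat \<times> 'd \<Rightarrow> real)) measure) p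
           (\<lambda>(a, W0). \<forall>V. frob_norm m (mat_diff V W0) \<le> R_V \<longrightarrow>
              pop_risk \<rho> m a \<mu> V / pop_risk0 \<rho> m a W0 \<mu> V \<le> exp \<tau>)"
    unfolding whp_def
  proof (intro bexI[OF _ F(1)] conjI ballI)
    show "p \<le> measure (init_measure m) F" using F(2) by simp
    fix \<omega> assume "\<omega> \<in> F"
    then obtain a W0 where \<omega>: "\<omega> = (a, W0)" and a: "\<forall>j<m. a j \<in> {-1, 1}" and W0: "W0 \<in> E"
      using FE by (cases \<omega>) auto
    show "case \<omega> of (a, W0) \<Rightarrow> \<forall>V. frob_norm m (mat_diff V W0) \<le> R_V \<longrightarrow>
              pop_risk \<rho> m a \<mu> V / pop_risk0 \<rho> m a W0 \<mu> V \<le> exp \<tau>"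
      unfolding \<omega> prod.case
    proof (intro allI impI)
      fix V :: "nat \<times> 'd \<Rightarrow> real" assume V: "frob_norm m (mat_diff V W0) \<le> R_V"
      show "pop_risk \<rho> m a \<mu> V / pop_risk0 \<rho> m a W0 \<mu> V \<le> exp \<tau>"
        by (rule risk_ratio[OF assms(9)]) (use Eb W0 a V in blast)
    qed
  qed
  show "let \<tau>\<^sub>3 = 25 * \<rho> * R_V powr (4/3) * sqrt (ln (exp 1 * real CARD('d) * real m / \<delta>)) / real m powr (1/6);
          p = 1 - (1 + 3 * (real CARD('d) ^ 2 * real m) ^ CARD('d)) * \<delta>
      in whp (init_measure m :: ((nat \<Rightarrow> real) \<times> (nat \<times> 'd \<Rightarrow> real)) measure) p
           (\<lambda>(a, W0). \<forall>V (x :: real^'d). frob_norm m (mat_diff V W0) \<le> R_V \<longrightarrow> norm x \<le> 1 \<longrightarrow>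
              \<bar>frob_inner m (mat_diff (grad_net \<rho> m a V x) (grad_net \<rho> m a W0 x)) V\<bar> \<le> \<tau>\<^sub>3)
       \<and> whp (init_measure m :: ((nat \<Rightarrow> real) \<times> (nat \<times> 'd \<Rightarrow> real)) measure) p
           (\<lambda>(a, W0). \<forall>V. frob_norm m (mat_diff V W0) \<le> R_V \<longrightarrow>
              pop_risk \<rho> m a \<mu> V / pop_risk0 \<rho> m a W0 \<mu> V \<le> exp \<tau>\<^sub>3)"
    unfolding Let_def \<tau>_def[symmetric] p_def[symmetric] using w3 w4 by blast
qed

end
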